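(* Let $K,N_r\in\mathbb{N}$ with $N_r\geq 2K+1$, let $R>0$, and let $\mathbf{Y}\in\mathbb{C}^{2N_r\times(4K+2)}$, $\mathbf{Z}_{\mathbf{Y}}$ be as in the context. Then, as $R\to+\infty$, the matrix $\mathbf{Y}^*\mathbf{Y}$ admits the decomposition $$\mathbf{Y}^*\mathbf{Y}=N_r\mathbf{Z}_{\mathbf{Y}}+\mathbf{Q},$$ where $\mathbf{Q}=(q_{\ell\ell'})_{\ell,\ell'=1,\dots,4K+2}$ satisfies $|q_{\ell\ell'}|\leq CR^{-2}$ for some constant $C>0$ independent of $R$.
   Context: Let $\lambda_0,\mu_0,\rho_0>0$, $\omega>0$, $c_S=\sqrt{\mu_0/\rho_0}$, $c_P=\sqrt{(\lambda_0+2\mu_0)/\rho_0}$, $\kappa_\alpha=\omega/c_\alpha$ ($\alpha\in\{P,S\}$). With $\mathbf{x}=|\mathbf{x}|(\cos\varphi_{\mathbf{x}},\sin\varphi_{\mathbf{x}})$ and $\vec\nabla_\perp\times f=(\partial_2 f,-\partial_1 f)^\top$, let $\mathbf{H}^P_n(\mathbf{x})=\nabla[H^{(1)}_n(\kappa_P|\mathbf{x}|)e^{in\varphi_{\mathbf{x}}}]$ and $\mathbf{H}^S_n(\mathbf{x})=\vec\nabla_\perp\times[H^{(1)}_n(\kappa_S|\mathbf{x}|)e^{in\varphi_{\mathbf{x}}}]$, $n\in\mathbb{Z}$, where $H^{(1)}_n$ is the Hankel function of the first kind. Receivers: $\mathbf{x}_r=R(\cos\theta_r,\sin\theta_r)$,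 $\theta_r=2\pi r/N_r$, $r=1,\dots,N_r$, with reception directions $\mathbf{d}_r=(\cos\theta_r,\sin\theta_r)$ and $\mathbf{d}_r^\perp=(-\sin\theta_r,\cos\theta_r)$. Define $\mathbf{Y}^\alpha_\parallel,\mathbf{Y}^\alpha_\perp\in\mathbb{C}^{N_r\times(2K+1)}$ (columns indexed by $n=-K,\dots,K$) by $(\mathbf{Y}^\alpha_\parallel)_{rn}=\overline{\mathbf{H}^\alpha_n(\mathbf{x}_r)}\cdot\mathbf{d}_r$, $(\mathbf{Y}^\alpha_\perp)_{rn}=\overline{\mathbf{H}^\alpha_n(\mathbf{x}_r)}\cdot\mathbf{d}^\perp_r$, and $\mathbf{Y}=\begin{pmatrix}\mathbf{Y}^P_\parallel & \mathbf{Y}^S_\parallel\\ \mathbf{Y}^P_\perp & \mathbf{Y}^S_\perp\end{pmatrix}$; $\mathbf{Y}^*$ is the conjugate transpose. Let $g^P_m=\kappa_P(H^{(1)}_m)'(\kappa_PR)$ and $h^S_m=-\kappa_S(H^{(1)}_m)'(\kappa_SR)$, and $\mathbf{Z}_{\mathbf{Y}}=\begin{pmatrix}\mathbf{C}^{P,P} & \mathbf{0}\\ \mathbf{0} & \mathbf{D}^{S,S}\end{pmatrix}$ with $\mathbf{C}^{P,P}={\rm diag}(|g^P_{-K}|^2,\dots,|g^P_K|^2)$, $\mathbf{D}^{S,S}={\rm diag}(|h^S_{-K}|^2,\dots,|h^S_K|^2)$. *)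

theory Defs
  imports "HOL-Analysis.Analysis"
begin

text \<open>Bessel functions of integer order for real argument x > 0, via Bessel's
integral and Schlaefli's integral (DLMF 10.9.2, 10.9.7 with cos(n pi) = (-1)^n).\<close>

definition besselJ :: "int \<Rightarrow> real \<Rightarrow> real" where
  "besselJ n x = (1 / pi) * integral {0..pi} (\<lambda>\<theta>. cos (of_int n * \<theta> - x * sin \<theta>))"

definition besselY :: "int \<Rightarrow> real \<Rightarrow> real" where
  "besselY n x =
     (1 / pi) * integral {0..pi} (\<lambda>\<theta>. sin (x * sin \<theta> - of_int n * \<theta>))
   - (1 / pi) * integral {0..}
       (\<lambda>t. (exp (of_int n * t) + ((-1::real) powi n) * exp (- of_int n * t)) * exp (- x * sinh t))"

definition hankel1 :: "int \<Rightarrow> real \<Rightarrow> complex" where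
  "hankel1 n x = Complex (besselJ n x) (besselY n x)"

text \<open>Points of the plane are represented as complex numbers z = x1 + i x2.\<close>
definition pd1 :: "(complex \<Rightarrow> complex) \<Rightarrow> complex \<Rightarrow> complex" where
  "pd1 f z = vector_derivative (\<lambda>t::real. f (z + of_real t)) (at 0)"

definition pd2 :: "(complex \<Rightarrow> complex) \<Rightarrow> complex \<Rightarrow> complex" where
  "pd2 f z = vector_derivative (\<lambda>t::real. f (z + \<i> * of_real t)) (at 0)"

text \<open>The function x \<mapsto> H_n(\<kappa>|x|) e^{i n \<phi>_x}; e^{i\<phi>_x} = z/|z|.\<close>
definition radial_mode :: "real \<Rightarrow> int \<Rightarrow> complex \<Rightarrow> complex" where
  "radial_mode \<kappa> n z = hankel1 n (\<kappa> * cmod z) * (z / of_real (cmod z)) powi n"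

definition HP :: "real \<Rightarrow> int \<Rightarrow> complex \<Rightarrow> complex \<times> complex" where
  "HP \<kappa> n z = (pd1 (radial_mode \<kappa> n) z, pd2 (radial_mode \<kappa> n) z)"

definition HS :: "real \<Rightarrow> int \<Rightarrow> complex \<Rightarrow> complex \<times> complex" where
  "HS \<kappa> n z = (pd2 (radial_mode \<kappa> n) z, - pd1 (radial_mode \<kappa> n) z)"

definition cdot :: "complex \<times> complex \<Rightarrow> real \<times> real \<Rightarrow> complex" where
  "cdot v d = cnj (fst v) * of_real (fst d) + cnj (snd v) * of_real (snd d)"

definition theta_r :: "nat \<Rightarrow> nat \<Rightarrow> real" where
  "theta_r Nr r = 2 * pi * real r / real Nr"

definition x_r :: "real \<Rightarrow> nat \<Rightarrow> nat \<Rightarrow> complex" where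
  "x_r R Nr r = of_real R * cis (theta_r Nr r)"

text \<open>Column l (0-based, l < 4K+2): l < 2K+1 is P with n = l - K,
  otherwise S with n = l - (2K+1) - K.\<close>
definition Hfield :: "real \<Rightarrow> real \<Rightarrow> nat \<Rightarrow> nat \<Rightarrow> complex \<Rightarrow> complex \<times> complex" where
  "Hfield \<kappa>P \<kappa>S K l z =
     (if l < 2*K+1 then HP \<kappa>P (int l - int K) z
      else HS \<kappa>S (int l - int (2*K+1) - int K) z)"

text \<open>Row i (0-based, i < 2Nr): i < Nr is the parallel component at receiver r = i+1,
  otherwise the perpendicular component at receiver r = i - Nr + 1.\<close>
definition Ymat :: "real \<Rightarrow> real \<Rightarrow> nat \<Rightarrow> nat \<Rightarrow> real \<Rightarrow> nat \<Rightarrow> nat \<Rightarrow> complex" where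
  "Ymat \<kappa>P \<kappa>S K Nr R i l =
     (if i < Nr then
        (let r = i + 1; \<theta> = theta_r Nr r in
          cdot (Hfield \<kappa>P \<kappa>S K l (x_r R Nr r)) (cos \<theta>, sin \<theta>))
      else
        (let r = i - Nr + 1; \<theta> = theta_r Nr r in
          cdot (Hfield \<kappa>P \<kappa>S K l (x_r R Nr r)) (- sin \<theta>, cos \<theta>)))"

definition YstarY :: "real \<Rightarrow> real \<Rightarrow> nat \<Rightarrow> nat \<Rightarrow> real \<Rightarrow> nat \<Rightarrow> nat \<Rightarrow> complex" where
  "YstarY \<kappa>P \<kappa>S K Nr R l l' =
     (\<Sum>i<2*Nr. cnj (Ymat \<kappa>P \<kappa>S K Nr R i l) * Ymat \<kappa>P \<kappa>S K Nr R i l')"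

definition gP :: "real \<Rightarrow> real \<Rightarrow> int \<Rightarrow> complex" where
  "gP \<kappa> R m = of_real \<kappa> * vector_derivative (hankel1 m) (at (\<kappa> * R))"

definition hS :: "real \<Rightarrow> real \<Rightarrow> int \<Rightarrow> complex" where
  "hS \<kappa> R m = - of_real \<kappa> * vector_derivative (hankel1 m) (at (\<kappa> * R))"

definition ZY :: "real \<Rightarrow> real \<Rightarrow> nat \<Rightarrow> real \<Rightarrow> nat \<Rightarrow> nat \<Rightarrow> complex" where
  "ZY \<kappa>P \<kappa>S K R l l' =
     (if l \<noteq> l' then 0
      else if l < 2*K+1 then of_real ((cmod (gP \<kappa>P R (int l - int K)))\<^sup>2)
      else of_real ((cmod (hS \<kappa>S R (int l - int (2*K+1) - int K)))\<^sup>2))"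

end

theory Submission
  imports Defs
begin


lemma exp_dom_integrable:
  fixes f :: "real \<Rightarrow> real"
  assumes cont: "continuous_on {0..} f" and a: "a > 0"
    and bd: "\<And>t. t \<ge> 0 \<Longrightarrow> \<bar>f t\<bar> \<le> C * exp (-a*t)"
  shows "f integrable_on {0..}" "\<bar>integral {0..} f\<bar> \<le> C / a"
proof -
  have gh: "((\<lambda>t. C * exp(-a*t)) has_integral C / a) {0..}"
    using has_integral_mult_right[OF has_integral_exp_minus_to_infinity[OF a, of 0], of C] by simp
  hence gi: "(\<lambda>t. C * exp(-a*t)) integrable_on {0..}" by blast
  show fi: "f integrable_on {0..}"
  proof (rule integrable_on_all_intervals_integrable_bound[where g="\<lambda>t. C*exp(-a*t)"])
    fix u v :: real
    have eq: "{0..} \<inter> cbox u v = {max 0 u..v}" by auto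
    show "(\<lambda>x. if x \<in> {0..} then f x else 0) integrable_on cbox u v"
      unfolding integrable_restrict_Int eq
      by (rule integrable_continuous_real, rule continuous_on_subset[OF cont]) auto
  qed (use bd gi in simp_all)
  have "norm (integral {0..} f) \<le> integral {0..} (\<lambda>t. C * exp(-a*t))"
    by (rule integral_norm_bound_integral[OF fi gi]) (use bd in auto)
  thus "\<bar>integral {0..} f\<bar> \<le> C / a" using integral_unique[OF gh] by simp
qed

definition gfun :: "int \<Rightarrow> real \<Rightarrow> real" where
  "gfun n t = exp (of_int n * t) + ((-1::real) powi n) * exp (- of_int n * t)"

lemma gfun_bound: "\<bar>gfun n t\<bar> \<le> 2 * exp (\<bar>of_int n\<bar> * t)" if "t \<ge> 0"
proof -
  have p: "\<bar>(-1::real) powi n\<bar> = 1" by (simp add: power_int_abs)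
  have "exp (of_int n * t) \<le> exp (\<bar>of_int n\<bar> * t)" using that by (auto intro: mult_right_mono)
  moreover have "exp (- of_int n * t) \<le> exp (\<bar>of_int n\<bar> * t)"
    using that by (subst exp_le_cancel_iff, intro mult_right_mono) auto
  moreover have "\<bar>gfun n t\<bar> \<le> \<bar>exp (of_int n * t)\<bar> + \<bar>(-1::real) powi n * exp (- of_int n * t)\<bar>"
    unfolding gfun_def by (rule abs_triangle_ineq)
  moreover have "\<bar>(-1::real) powi n * exp (- of_int n * t)\<bar> = exp (- of_int n * t)"
    using p by (simp add: abs_mult)
  moreover have "\<bar>exp (of_int n * t)\<bar> = exp (of_int n * t)" by simp
  ultimately show ?thesis by linarith
qed

lemma continuous_gfun [continuous_intros]: "continuous_on S (gfun n)"
  unfolding gfun_def by (intro continuous_intros)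

lemma sinh_ge_self: "t \<ge> 0 \<Longrightarrow> t \<le> sinh (t::real)"
  using real_le_x_sinh[of t] by (simp add: sinh_field_def exp_minus)

lemma sq_exp_le: "(s::real) \<ge> 0 \<Longrightarrow> s^2 * exp (-s) \<le> 4"
proof -
  assume s: "s \<ge> 0"
  have "1 + s/2 \<le> exp (s/2)" by (rule exp_ge_add_one_self)
  hence "(1 + s/2)^2 \<le> exp (s/2) ^2" using s by (intro power_mono) auto
  also have "exp (s/2) ^2 = exp s" by (simp add: power2_eq_square flip: exp_add)
  finally have A: "(1 + s/2)^2 \<le> exp s" .
  have "(s/2)^2 \<le> (1 + s/2)^2" using s by (intro power_mono) auto
  moreover have "s^2 = 4 * (s/2)^2" by (simp add: power2_eq_square)
  ultimately have "s^2 \<le> 4 * exp s" using A by linarith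
  thus ?thesis by (simp add: exp_minus field_simps)
qed

lemma lin_exp_le: "(s::real) \<ge> 0 \<Longrightarrow> s * exp (-s) \<le> 1"
proof -
  assume s: "s \<ge> 0"
  have "1 + s \<le> exp s" by (rule exp_ge_add_one_self)
  hence "s \<le> exp s" by linarith
  thus ?thesis by (simp add: exp_minus field_simps)
qed

lemma exp_taylor2: "\<bar>exp (u::real) - 1 - u\<bar> \<le> exp \<bar>u\<bar> * u^2 / 2"
proof -
  obtain t where t: "\<bar>t\<bar> \<le> \<bar>u\<bar>" "exp u = (\<Sum>m<2. u ^ m / fact m) + exp t / fact 2 * u ^ 2"
    using Maclaurin_exp_le[of u 2] by blast
  have e0: "exp u - 1 - u = exp t * u^2 / 2" using t(2) by (simp add: numeral_2_eq_2)
  have e: "\<bar>exp u - 1 - u\<bar> = exp t * u^2 / 2" by (simp only: e0) simp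
  have "exp t \<le> exp \<bar>u\<bar>" using t(1) by simp
  hence "exp t * u^2 \<le> exp \<bar>u\<bar> * u^2" by (rule mult_right_mono) simp
  thus ?thesis unfolding e by simp
qed

lemma rem_bound:
  fixes h s x :: real assumes s: "s \<ge> 0" and h: "\<bar>h\<bar> \<le> 1"
  shows "\<bar>exp (-(x+h) * s) - exp (-x * s) + h * s * exp(-x * s)\<bar> \<le> 2 * h^2 * exp (-(x-2) * s)"
proof -
  have eq: "exp (-(x+h) * s) - exp (-x * s) + h * s * exp(-x * s) = exp(-x * s) * (exp (-h * s) - 1 - (-h * s))"
    by (simp add: algebra_simps flip: exp_add)
  have "\<bar>exp (-h * s) - 1 - (-h * s)\<bar> \<le> exp (\<bar>- h * s\<bar>) * (-h * s)^2 / 2" by (rule exp_taylor2)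
  also have "\<dots> \<le> exp s * (h^2 * s^2) / 2"
  proof -
    have "\<bar>- h * s\<bar> \<le> s" using s h by (simp add: abs_mult mult_left_le_one_le)
    thus ?thesis by (intro divide_right_mono mult_mono) (auto simp: power_mult_distrib)
  qed
  also have "\<dots> \<le> exp s * (h^2 * (4 * exp s)) / 2"
  proof -
    have "s^2 * exp (-s) \<le> 4" by (rule sq_exp_le[OF s])
    hence "s^2 \<le> 4 * exp s" by (simp add: exp_minus field_simps)
    thus ?thesis by (intro divide_right_mono mult_left_mono) auto
  qed
  finally have "\<bar>exp (-h * s) - 1 - (-h * s)\<bar> \<le> 2 * h^2 * exp s * exp s" by (simp add: mult_ac)
  hence "\<bar>exp (-(x+h) * s) - exp (-x * s) + h * s * exp(-x * s)\<bar> \<le> exp(-x * s) * (2 * h^2 * exp s * exp s)"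
    unfolding eq abs_mult abs_exp_cancel by (rule mult_left_mono) simp_all
  also have "\<dots> = 2 * h^2 * exp (-x * s + s + s)"
    by (simp only: exp_add) (simp add: mult_ac)
  also have "-x * s + s + s = -(x-2) * s" by (simp add: algebra_simps)
  finally show ?thesis .
qed

definition tailI :: "int \<Rightarrow> real \<Rightarrow> real" where
  "tailI n x = integral {0..} (\<lambda>t. gfun n t * exp (-x * sinh t))"

definition tailD :: "int \<Rightarrow> real \<Rightarrow> real" where
  "tailD n x = integral {0..} (\<lambda>t. - (sinh t * gfun n t * exp (-x * sinh t)))"

lemma tail_f_bound:
  assumes "t \<ge> 0" "x \<ge> 0"
  shows "\<bar>gfun n t * exp (-x * sinh t)\<bar> \<le> 2 * exp (-(x - \<bar>of_int n\<bar>) * t)"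
proof -
  have "exp (-x * sinh t) \<le> exp (-x * t)" using assms sinh_ge_self[of t] by (simp add: mult_left_mono)
  hence "\<bar>gfun n t * exp (-x * sinh t)\<bar> \<le> 2 * exp (\<bar>of_int n\<bar> * t) * exp (-x * t)"
    unfolding abs_mult using gfun_bound[OF assms(1), of n] by (intro mult_mono) auto
  also have "\<dots> = 2 * exp (-(x - \<bar>of_int n\<bar>) * t)" by (simp add: algebra_simps flip: exp_add)
  finally show ?thesis .
qed

lemma tail_d_bound:
  assumes "t \<ge> 0" "x \<ge> 1"
  shows "\<bar>- (sinh t * gfun n t * exp (-x * sinh t))\<bar> \<le> 2 * exp (-(x - 1 - \<bar>of_int n\<bar>) * t)"
proof -
  have "\<bar>- (sinh t * gfun n t * exp (-x * sinh t))\<bar> = \<bar>gfun n t * exp (-(x-1) * sinh t)\<bar> * (sinh t * exp (- sinh t))"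
    using assms by (simp add: abs_mult algebra_simps flip: exp_add)
  also have "\<dots> \<le> 2 * exp (-((x-1) - \<bar>of_int n\<bar>) * t) * 1"
    using assms lin_exp_le[of "sinh t"] by (intro mult_mono tail_f_bound) auto
  finally show ?thesis by (simp add: algebra_simps)
qed

lemma tail_integrable:
  assumes "x > \<bar>of_int n\<bar>"
  shows "(\<lambda>t. gfun n t * exp (-x * sinh t)) integrable_on {0..}"
    "\<bar>tailI n x\<bar> \<le> 2 / (x - \<bar>of_int n\<bar>)"
proof -
  have c: "continuous_on {0..} (\<lambda>t. gfun n t * exp (-x * sinh t))" by (intro continuous_intros)
  have b: "\<And>t. t \<ge> 0 \<Longrightarrow> \<bar>gfun n t * exp (-x * sinh t)\<bar> \<le> 2 * exp (-(x - \<bar>of_int n\<bar>) * t)"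
    using tail_f_bound[of _ x n] assms by simp
  from exp_dom_integrable[OF c _ b] assms show "(\<lambda>t. gfun n t * exp (-x * sinh t)) integrable_on {0..}"
    "\<bar>tailI n x\<bar> \<le> 2 / (x - \<bar>of_int n\<bar>)" unfolding tailI_def by auto
qed

lemma tailD_integrable:
  assumes "x > 1 + \<bar>of_int n\<bar>"
  shows "(\<lambda>t. - (sinh t * gfun n t * exp (-x * sinh t))) integrable_on {0..}"
    "\<bar>tailD n x\<bar> \<le> 2 / (x - 1 - \<bar>of_int n\<bar>)"
proof -
  have c: "continuous_on {0..} (\<lambda>t. - (sinh t * gfun n t * exp (-x * sinh t)))" by (intro continuous_intros)
  have b: "\<And>t. t \<ge> 0 \<Longrightarrow> \<bar>- (sinh t * gfun n t * exp (-x * sinh t))\<bar> \<le> 2 * exp (-(x - 1 - \<bar>of_int n\<bar>) * t)"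
    using tail_d_bound[of _ x n] assms by simp
  from exp_dom_integrable[OF c _ b] assms show "(\<lambda>t. - (sinh t * gfun n t * exp (-x * sinh t))) integrable_on {0..}"
    "\<bar>tailD n x\<bar> \<le> 2 / (x - 1 - \<bar>of_int n\<bar>)" unfolding tailD_def by auto
qed

lemma tail_rem_bound:
  assumes x: "x > 3 + \<bar>of_int n\<bar>" and h: "\<bar>h\<bar> \<le> 1"
  shows "\<bar>tailI n (x+h) - tailI n x - h * tailD n x\<bar> \<le> 4 * h^2 / (x - 2 - \<bar>of_int n\<bar>)"
proof -
  let ?R = "\<lambda>t. gfun n t * (exp (-(x+h) * sinh t) - exp (-x * sinh t) + h * sinh t * exp (-x * sinh t))"
  have i1: "(\<lambda>t. gfun n t * exp (-(x+h) * sinh t)) integrable_on {0..}"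
    using tail_integrable(1)[of n "x+h"] x h by auto
  have i2: "(\<lambda>t. gfun n t * exp (-x * sinh t)) integrable_on {0..}"
    using tail_integrable(1)[of n x] x by auto
  have i3: "(\<lambda>t. - (sinh t * gfun n t * exp (-x * sinh t))) integrable_on {0..}"
    using tailD_integrable(1)[of n x] x by auto
  have "tailI n (x+h) - tailI n x - h * tailD n x =
      integral {0..} (\<lambda>t. gfun n t * exp (-(x+h) * sinh t)) - integral {0..} (\<lambda>t. gfun n t * exp (-x * sinh t))
      - h * integral {0..} (\<lambda>t. - (sinh t * gfun n t * exp (-x * sinh t)))"
    unfolding tailI_def tailD_def by simp
  also have "\<dots> = integral {0..} (\<lambda>t. gfun n t * exp (-(x+h) * sinh t) - gfun n t * exp (-x * sinh t)
      - h * - (sinh t * gfun n t * exp (-x * sinh t)))"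
    by (rule integral_unique[symmetric], intro has_integral_diff has_integral_mult_right integrable_integral i1 i2 i3)
  also have "\<dots> = integral {0..} ?R"
    by (rule integral_cong) (simp add: algebra_simps)
  finally have eq: "tailI n (x+h) - tailI n x - h * tailD n x = integral {0..} ?R" .
  have b: "\<bar>?R t\<bar> \<le> (4 * h^2) * exp (-(x - 2 - \<bar>of_int n\<bar>) * t)" if t: "t \<ge> 0" for t
  proof -
    have "\<bar>?R t\<bar> \<le> (2 * exp (\<bar>of_int n\<bar> * t)) * (2 * h^2 * exp (-(x-2) * sinh t))"
      unfolding abs_mult
      using gfun_bound[OF t, of n] rem_bound[of "sinh t" h x] t h
      by (intro mult_mono) auto
    also have "\<dots> \<le> (2 * exp (\<bar>of_int n\<bar> * t)) * (2 * h^2 * exp (-(x-2) * t))"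
    proof -
      have "(x-2) * t \<le> (x-2) * sinh t" by (rule mult_left_mono) (use x sinh_ge_self[OF t] in auto)
      hence "exp (-(x-2) * sinh t) \<le> exp (-(x-2) * t)" by (simp add: algebra_simps)
      thus ?thesis by (intro mult_left_mono) auto
    qed
    also have "\<dots> = (4 * h^2) * exp (\<bar>of_int n\<bar> * t + (-(x-2) * t))"
      by (simp only: exp_add) (simp add: mult_ac)
    also have "\<bar>of_int n\<bar> * t + (-(x-2) * t) = -(x - 2 - \<bar>of_int n\<bar>) * t" by (simp add: algebra_simps)
    finally show ?thesis .
  qed
  have c: "continuous_on {0..} ?R" by (intro continuous_intros)
  have "x - 2 - \<bar>of_int n\<bar> > 0" using x by simp
  from exp_dom_integrable(2)[OF c this b] show ?thesis unfolding eq .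
qed

lemma aux_div4: "(a::real) \<noteq> 0 \<Longrightarrow> (4 * (a*a) / D) / a = 4 / D * a"
  by (cases "D = 0") (simp_all add: field_simps)

lemma tail_deriv:
  assumes x: "x > 3 + \<bar>of_int n\<bar>"
  shows "(tailI n has_real_derivative tailD n x) (at x)"
proof -
  define K where "K = 4 / (x - 2 - \<bar>of_int n\<bar>)"
  have Kp: "K > 0" using x by (simp add: K_def)
  have ev: "\<forall>\<^sub>F h in at 0. norm ((tailI n (x + h) - tailI n x) / h - tailD n x) \<le> K * \<bar>h\<bar>"
  proof -
    have "\<forall>\<^sub>F h in at (0::real). \<bar>h\<bar> < 1 \<and> h \<noteq> 0"
      unfolding eventually_at by (rule exI[of _ 1]) auto
    thus ?thesis
    proof eventually_elim
      case (elim h)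
      have "(tailI n (x + h) - tailI n x) / h - tailD n x = (tailI n (x+h) - tailI n x - h * tailD n x) / h"
        using elim by (simp add: field_simps)
      also have "norm \<dots> \<le> (4 * h^2 / (x - 2 - \<bar>of_int n\<bar>)) / \<bar>h\<bar>"
        unfolding real_norm_def abs_divide by (rule divide_right_mono) (use tail_rem_bound[OF x, of h] elim in auto)
      also have "\<dots> = K * \<bar>h\<bar>"
      proof -
        have "h^2 = \<bar>h\<bar> * \<bar>h\<bar>" by (simp add: power2_eq_square)
        thus ?thesis unfolding K_def using aux_div4[of "\<bar>h\<bar>" "x - 2 - \<bar>of_int n\<bar>"] elim by simp
      qed
      finally show ?case .
    qed
  qed
  have "((\<lambda>h. K * \<bar>h\<bar>) \<longlongrightarrow> K * \<bar>0\<bar>) (at (0::real))"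
    by (intro tendsto_intros)
  hence "((\<lambda>h. K * \<bar>h\<bar>) \<longlongrightarrow> 0) (at (0::real))" by simp
  from Lim_null_comparison[OF ev this] show ?thesis
    unfolding DERIV_def by (simp add: LIM_zero_iff)
qed




lemma cis_vd:
  "((\<lambda>\<theta>. cis (x * sin \<theta>)) has_vector_derivative (\<i> * of_real (x * cos \<theta>) * cis (x * sin \<theta>))) (at \<theta> within S)"
proof -
  have "((\<lambda>\<theta>. x * sin \<theta>) has_derivative (\<lambda>t. t * (x * cos \<theta>))) (at \<theta> within S)"
    using has_derivative_mult_right[OF has_derivative_sin[OF has_derivative_ident], of x] 
    by (simp add: mult_ac)
  from has_derivative_cis[OF this] show ?thesis unfolding has_vector_derivative_def
    by (rule has_derivative_eq_rhs) (simp add: fun_eq_iff scaleR_conv_of_real mult_ac)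
qed

lemma inv_cos_vd:
  assumes "cos \<theta> \<noteq> 0"
  shows "((\<lambda>\<theta>. complex_of_real (1 / cos \<theta>)) has_vector_derivative of_real (sin \<theta> / (cos \<theta>)^2)) (at \<theta> within S)"
  apply (rule has_vector_derivative_of_real)
  using assms by (auto intro!: derivative_eq_intros simp: power2_eq_square)

lemma osc_core:
  fixes a a' :: "real \<Rightarrow> complex"
  assumes c: "0 \<le> c" "c < pi/2" and x: "x > 0"
    and da: "\<And>\<theta>. \<theta> \<in> {0..c} \<Longrightarrow> (a has_vector_derivative a' \<theta>) (at \<theta> within {0..c})"
    and ca': "continuous_on {0..c} a'"
    and b0: "\<And>\<theta>. \<theta> \<in> {0..c} \<Longrightarrow> norm (a \<theta>) \<le> M0"
    and b1: "\<And>\<theta>. \<theta> \<in> {0..c} \<Longrightarrow> norm (a' \<theta>) \<le> M1"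
  shows "norm (integral {0..c} (\<lambda>\<theta>. a \<theta> * cis (x * sin \<theta>))) \<le> 3 * (M0 + M1) / (x * cos c)"
proof -
  have cpos: "cos \<theta> > 0" if "\<theta> \<in> {0..c}" for \<theta> using cos_gt_zero_pi[of \<theta>] c that by auto
  have cle: "cos c \<le> cos \<theta>" if "\<theta> \<in> {0..c}" for \<theta> using cos_monotone_0_pi_le[of \<theta> c] c that by auto
  have ccpos: "cos c > 0" using cpos[of c] c by auto
  have sinnn: "sin \<theta> \<ge> 0" if "\<theta> \<in> {0..c}" for \<theta> using sin_ge_zero[of \<theta>] c that by auto
  have M0: "M0 \<ge> 0" using b0[of 0] c by (auto intro: order_trans[OF norm_ge_zero])
  have M1: "M1 \<ge> 0" using b1[of 0] c by (auto intro: order_trans[OF norm_ge_zero])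
  have ca: "continuous_on {0..c} a" by (rule continuous_on_vector_derivative[OF da])
  define A where "A \<theta> = a \<theta> * cis (x * sin \<theta>)" for \<theta>
  define F where "F \<theta> = a \<theta> * (of_real (1 / cos \<theta>) * cis (x * sin \<theta>))" for \<theta>
  define B where "B \<theta> = (a' \<theta> * of_real (1 / cos \<theta>) + a \<theta> * of_real (sin \<theta> / (cos \<theta>)^2)) * cis (x * sin \<theta>)" for \<theta>
  have dF: "(F has_vector_derivative (B \<theta> + (\<i> * of_real x) * A \<theta>)) (at \<theta> within {0..c})"
    if th: "\<theta> \<in> {0..c}" for \<theta>
  proof -
    have cz: "cos \<theta> \<noteq> 0" using cpos[OF th] by simp
    have "(F has_vector_derivative
        (a \<theta> * (of_real (1 / cos \<theta>) * (\<i> * of_real (x * cos \<theta>) * cis (x * sin \<theta>))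
          + of_real (sin \<theta> / (cos \<theta>)^2) * cis (x * sin \<theta>)) + a' \<theta> * (of_real (1 / cos \<theta>) * cis (x * sin \<theta>))))
        (at \<theta> within {0..c})"
      unfolding F_def
      by (intro has_vector_derivative_mult da[OF th] inv_cos_vd[OF cz] cis_vd)
    moreover have "of_real (1 / cos \<theta>) * (\<i> * of_real (x * cos \<theta>) * cis (x * sin \<theta>)) = \<i> * of_real x * cis (x * sin \<theta>)"
    proof -
      have "complex_of_real (1 / cos \<theta>) * of_real (x * cos \<theta>) = of_real x"
        by (simp only: of_real_mult[symmetric]) (use cz in simp)
      thus ?thesis by (metis (no_types, lifting) mult.assoc mult.left_commute)
    qed
    ultimately show ?thesis using cz by (simp add: A_def B_def algebra_simps)
  qed
  have cA: "continuous_on {0..c} A" unfolding A_def by (intro continuous_intros ca)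
  have cB: "continuous_on {0..c} B" unfolding B_def
    apply (intro continuous_intros ca ca') using cpos by fastforce+
  have iA: "A integrable_on {0..c}" by (rule integrable_continuous_real[OF cA])
  have iB: "B integrable_on {0..c}" by (rule integrable_continuous_real[OF cB])
  have ftc: "((\<lambda>\<theta>. B \<theta> + (\<i> * of_real x) * A \<theta>) has_integral (F c - F 0)) {0..c}"
    by (rule fundamental_theorem_of_calculus[OF c(1)]) (use dF in auto)
  have "((\<lambda>\<theta>. B \<theta> + (\<i> * of_real x) * A \<theta>) has_integral (integral {0..c} B + (\<i> * of_real x) * integral {0..c} A)) {0..c}"
    by (intro has_integral_add has_integral_mult_right integrable_integral iA iB)
  hence eq: "(\<i> * of_real x) * integral {0..c} A = F c - F 0 - integral {0..c} B"
    using has_integral_unique[OF ftc] by (simp add: algebra_simps)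
  have nF: "norm (F \<theta>) \<le> M0 / cos c" if th: "\<theta> \<in> {0..c}" for \<theta>
  proof -
    have "norm (F \<theta>) = norm (a \<theta>) / cos \<theta>" unfolding F_def using cpos[OF th] by (simp add: norm_mult norm_divide)
    also have "\<dots> \<le> M0 / cos \<theta>" using b0[OF th] cpos[OF th] by (simp add: divide_right_mono)
    also have "\<dots> \<le> M0 / cos c" using M0 cle[OF th] ccpos by (simp add: divide_left_mono)
    finally show ?thesis .
  qed
  define g where "g \<theta> = M1 / cos c + M0 * (sin \<theta> / (cos \<theta>)^2)" for \<theta>
  have nB: "norm (B \<theta>) \<le> g \<theta>" if th: "\<theta> \<in> {0..c}" for \<theta>
  proof -
    have "norm (B \<theta>) = norm (a' \<theta> * of_real (1 / cos \<theta>) + a \<theta> * of_real (sin \<theta> / (cos \<theta>)^2))"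
      unfolding B_def by (simp only: norm_mult norm_cis mult_1_right)
    also have "\<dots> \<le> norm (a' \<theta> * of_real (1 / cos \<theta>)) + norm (a \<theta> * of_real (sin \<theta> / (cos \<theta>)^2))"
      by (rule norm_triangle_ineq)
    also have "\<dots> = norm (a' \<theta>) * (1 / cos \<theta>) + norm (a \<theta>) * (sin \<theta> / (cos \<theta>)^2)"
      using cpos[OF th] sinnn[OF th] by (simp only: norm_mult norm_of_real) simp
    also have "\<dots> \<le> M1 * (1 / cos c) + M0 * (sin \<theta> / (cos \<theta>)^2)"
    proof (intro add_mono mult_mono)
      show "1 / cos \<theta> \<le> 1 / cos c" using cle[OF th] ccpos by (simp add: divide_left_mono)
    qed (use b0[OF th] b1[OF th] cpos[OF th] sinnn[OF th] M1 M0 in auto)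
    finally show ?thesis by (simp add: g_def)
  qed
  have gint: "(g has_integral ((M1 * c / cos c + M0 / cos c) - (M1 * 0 / cos c + M0 / cos 0))) {0..c}"
  proof (rule fundamental_theorem_of_calculus[OF c(1)])
    fix \<theta> assume th: "\<theta> \<in> {0..c}"
    have cz: "cos \<theta> \<noteq> 0" using cpos[OF th] by simp
    show "((\<lambda>\<theta>. M1 * \<theta> / cos c + M0 / cos \<theta>) has_vector_derivative g \<theta>) (at \<theta> within {0..c})"
      unfolding has_real_derivative_iff_has_vector_derivative[symmetric] g_def
      using cz ccpos by (auto intro!: derivative_eq_intros simp: power2_eq_square field_simps)
  qed
  have "norm (integral {0..c} B) \<le> integral {0..c} g"
    by (rule integral_norm_bound_integral[OF iB]) (use gint nB in auto)
  also have "\<dots> = M1 * c / cos c + M0 / cos c - M0" using integral_unique[OF gint] by simp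
  finally have nIB: "norm (integral {0..c} B) \<le> M1 * c / cos c + M0 / cos c - M0" .
  have "x * norm (integral {0..c} A) = norm ((\<i> * of_real x) * integral {0..c} A)"
    using x by (simp add: norm_mult)
  also have "\<dots> \<le> norm (F c) + norm (F 0) + norm (integral {0..c} B)"
    unfolding eq by (rule order_trans[OF norm_triangle_ineq4]) (simp add: norm_triangle_ineq4)
  also have "\<dots> \<le> M0 / cos c + M0 / cos c + (M1 * c / cos c + M0 / cos c - M0)"
    using nF[of c] nF[of 0] c nIB by (intro add_mono) auto
  also have "\<dots> \<le> 3 * (M0 + M1) / cos c"
  proof -
    have "M1 * c \<le> M1 * 3" using M1 c pi_less_4 by (intro mult_left_mono) auto
    hence "M0 + M0 + (M1 * c + M0) \<le> 3 * (M0 + M1)" using M0 by simp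
    hence "(M0 + M0 + (M1 * c + M0)) / cos c \<le> 3 * (M0 + M1) / cos c"
      using ccpos by (simp add: divide_right_mono)
    thus ?thesis using M0 by (simp add: add_divide_distrib)
  qed
  finally have "x * norm (integral {0..c} A) \<le> 3 * (M0 + M1) / cos c" .
  thus ?thesis unfolding A_def using x ccpos by (simp add: field_simps)
qed

lemma sin_lower: fixes d :: real assumes "0 < d" "d \<le> 1" shows "d / 2 \<le> sin d"
proof -
  obtain z where z: "0 < z" "z < d" "sin d - sin 0 = (d - 0) * cos z"
    using MVT2[OF assms(1), of sin cos] by (auto intro: DERIV_sin)
  have "cos (pi/3) \<le> cos z" using z assms pi_gt3 by (intro cos_monotone_0_pi_le) auto
  hence "1/2 \<le> cos z" by (simp add: cos_60)
  hence "d * (1/2) \<le> d * cos z" using assms by (intro mult_left_mono) auto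
  thus ?thesis using z by simp
qed

lemma reflect_pi:
  fixes f :: "real \<Rightarrow> 'a::banach"
  assumes "(f has_integral i) {pi - c..pi}"
  shows "((\<lambda>\<theta>. f (pi - \<theta>)) has_integral i) {0..c}"
proof -
  have "((\<lambda>x. f (1 *\<^sub>R x + pi)) has_integral (i /\<^sub>R 1 ^ DIM(real))) (cbox ((pi - c - pi) /\<^sub>R 1) ((pi - pi) /\<^sub>R 1))"
    using has_integral_affinity'[of f i "pi - c" pi 1 pi] assms by simp
  hence "((\<lambda>x. f (x + pi)) has_integral i) {-c..0}" by simp
  hence "((\<lambda>x. f (- x + pi)) has_integral i) {-0..- (-c)}"
    by (subst has_integral_reflect_real) 
  thus ?thesis by simp
qed

lemma osc_decay:
  fixes a a' :: "real \<Rightarrow> complex"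
  assumes da: "\<And>\<theta>. (a has_vector_derivative a' \<theta>) (at \<theta>)"
    and ca': "continuous_on UNIV a'"
    and b0: "\<And>\<theta>. norm (a \<theta>) \<le> M0" and b1: "\<And>\<theta>. norm (a' \<theta>) \<le> M1"
    and x: "x \<ge> 1"
  shows "norm (integral {0..pi} (\<lambda>\<theta>. a \<theta> * cis (x * sin \<theta>))) \<le> (12 * (M0 + M1) + 2 * M0) / sqrt x"
proof -
  define d where "d = 1 / sqrt x"
  have sx: "sqrt x \<ge> 1" using x by simp
  have d: "0 < d" "d \<le> 1" using sx by (auto simp: d_def)
  define c where "c = pi/2 - d"
  have c: "0 \<le> c" "c < pi/2" using d pi_ge_two by (auto simp: c_def)
  have cc: "cos c = sin d" by (simp add: c_def cos_diff)
  have M0: "M0 \<ge> 0" using b0[of 0] by (auto intro: order_trans[OF norm_ge_zero])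
  have M1: "M1 \<ge> 0" using b1[of 0] by (auto intro: order_trans[OF norm_ge_zero])
  have xd: "x * d = sqrt x" using x by (simp add: d_def real_sqrt_mult_self field_simps)
  have xc: "x * cos c \<ge> sqrt x / 2"
  proof -
    have "x * (d / 2) \<le> x * cos c" unfolding cc using sin_lower[OF d] x by (intro mult_left_mono) auto
    thus ?thesis using xd by simp
  qed
  have xcpos: "x * cos c > 0" using xc sx by linarith
  let ?f = "\<lambda>\<theta>. a \<theta> * cis (x * sin \<theta>)"
  have ca: "continuous_on UNIV a" using da by (intro continuous_on_vector_derivative) (auto intro: has_vector_derivative_at_within)
  have cf: "continuous_on UNIV ?f" by (intro continuous_intros ca)
  have fi: "?f integrable_on {u..v}" for u v by (rule integrable_continuous_real, rule continuous_on_subset[OF cf]) auto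
  have core: "norm (integral {0..c} (\<lambda>\<theta>. b \<theta> * cis (x * sin \<theta>))) \<le> 6 * (M0 + M1) / sqrt x"
    if db: "\<And>\<theta>. (b has_vector_derivative b' \<theta>) (at \<theta>)" and cb': "continuous_on UNIV b'"
      and bb0: "\<And>\<theta>. norm (b \<theta>) \<le> M0" and bb1: "\<And>\<theta>. norm (b' \<theta>) \<le> M1" for b b' :: "real \<Rightarrow> complex"
  proof -
    have "norm (integral {0..c} (\<lambda>\<theta>. b \<theta> * cis (x * sin \<theta>))) \<le> 3 * (M0 + M1) / (x * cos c)"
      using x c by (intro osc_core[OF c])
                   (auto intro: has_vector_derivative_at_within db bb0 bb1 continuous_on_subset[OF cb'])
    also have "\<dots> \<le> 3 * (M0 + M1) / (sqrt x / 2)"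
    proof (rule divide_left_mono)
      show "0 < x * cos c * (sqrt x / 2)" using mult_pos_pos[OF xcpos, of "sqrt x / 2"] sx by linarith
    qed (use xc M0 M1 in auto)
    finally show ?thesis by simp
  qed
  have I1: "norm (integral {0..c} ?f) \<le> 6 * (M0 + M1) / sqrt x"
    by (rule core[OF da ca' b0 b1])
  have "((\<lambda>\<theta>. ?f (pi - \<theta>)) has_integral integral {pi - c..pi} ?f) {0..c}"
    by (rule reflect_pi) (use fi in auto)
  hence eq3: "integral {pi - c..pi} ?f = integral {0..c} (\<lambda>\<theta>. a (pi - \<theta>) * cis (x * sin \<theta>))"
    by (simp add: integral_unique)
  have I3: "norm (integral {pi - c..pi} ?f) \<le> 6 * (M0 + M1) / sqrt x"
  proof -
    have "((\<lambda>\<theta>. a (pi - \<theta>)) has_vector_derivative - a' (pi - \<theta>)) (at \<theta>)" for \<theta>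
    proof -
      have "((\<lambda>\<theta>. pi - \<theta>) has_vector_derivative -1) (at \<theta>)"
        by (auto intro!: derivative_eq_intros)
      from vector_diff_chain_at[OF this da[of "pi - \<theta>"]] show ?thesis by (simp add: o_def)
    qed
    moreover have "continuous_on UNIV (\<lambda>\<theta>. - a' (pi - \<theta>))"
      by (intro continuous_intros continuous_on_compose2[OF ca']) auto
    ultimately show ?thesis unfolding eq3 by (intro core) (use b0 b1 in auto)
  qed
  have I2: "norm (integral {c..pi - c} ?f) \<le> 2 * M0 / sqrt x"
  proof -
    have "norm (integral {c..pi - c} ?f) \<le> integral {c..pi - c} (\<lambda>_. M0)"
      by (rule integral_norm_bound_integral) (use fi b0 in \<open>auto simp: norm_mult\<close>)
    also have "\<dots> = 2 * d * M0" using c by (simp add: c_def)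
    finally show ?thesis by (simp add: d_def)
  qed
  have split: "integral {0..pi} ?f = integral {0..c} ?f + integral {c..pi - c} ?f + integral {pi - c..pi} ?f"
  proof -
    have "integral {0..c} ?f + integral {c..pi} ?f = integral {0..pi} ?f"
      by (rule Henstock_Kurzweil_Integration.integral_combine) (use c fi in auto)
    moreover have "integral {c..pi - c} ?f + integral {pi - c..pi} ?f = integral {c..pi} ?f"
      by (rule Henstock_Kurzweil_Integration.integral_combine) (use c fi in auto)
    ultimately show ?thesis by (simp add: add.assoc)
  qed
  have "norm (integral {0..pi} ?f) \<le> norm (integral {0..c} ?f) + norm (integral {c..pi - c} ?f) + norm (integral {pi - c..pi} ?f)"
    unfolding split by (rule order_trans[OF norm_triangle_ineq], simp add: norm_triangle_ineq)
  also have "\<dots> \<le> 6 * (M0 + M1) / sqrt x + 2 * M0 / sqrt x + 6 * (M0 + M1) / sqrt x"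
    using I1 I2 I3 by linarith
  also have "\<dots> = (12 * (M0 + M1) + 2 * M0) / sqrt x" by (simp add: add_divide_distrib)
  finally show ?thesis .
qed




definition oscI :: "int \<Rightarrow> real \<Rightarrow> complex" where
  "oscI n x = integral {0..pi} (\<lambda>\<theta>. cis (x * sin \<theta> - of_int n * \<theta>))"

definition osc1 :: "int \<Rightarrow> real \<Rightarrow> complex" where
  "osc1 n x = integral {0..pi} (\<lambda>\<theta>. \<i> * of_real (sin \<theta>) * cis (x * sin \<theta> - of_int n * \<theta>))"

definition hD :: "int \<Rightarrow> real \<Rightarrow> complex" where
  "hD n x = osc1 n x / pi - \<i> * of_real (tailD n x) / pi"

lemma cont_osc [continuous_intros]: "continuous_on S (\<lambda>\<theta>. cis (x * sin \<theta> - of_int n * \<theta>))"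
  by (intro continuous_intros)

lemma hankel_repr:
  assumes "x > \<bar>of_int n\<bar>"
  shows "hankel1 n x = oscI n x / pi - \<i> * of_real (tailI n x) / pi"
proof -
  have hi: "((\<lambda>\<theta>. cis (x * sin \<theta> - of_int n * \<theta>)) has_integral oscI n x) {0..pi}"
    unfolding oscI_def by (intro integrable_integral integrable_continuous_real continuous_intros)
  have re: "integral {0..pi} (\<lambda>\<theta>. cos (of_int n * \<theta> - x * sin \<theta>)) = Re (oscI n x)"
  proof -
    have "((\<lambda>\<theta>. cos (of_int n * \<theta> - x * sin \<theta>)) has_integral Re (oscI n x)) {0..pi}"
      using has_integral_Re[OF hi] by (simp add: cos_diff mult.commute)
    thus ?thesis by (rule integral_unique)
  qed
  have im: "integral {0..pi} (\<lambda>\<theta>. sin (x * sin \<theta> - of_int n * \<theta>)) = Im (oscI n x)"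
    using has_integral_Im[OF hi] by (simp add: integral_unique)
  have ty: "integral {0..} (\<lambda>t. (exp (of_int n * t) + ((-1::real) powi n) * exp (- of_int n * t)) * exp (- x * sinh t)) = tailI n x"
    unfolding tailI_def gfun_def ..
  show ?thesis
    unfolding hankel1_def besselJ_def besselY_def ty re im
    by (simp add: complex_eq_iff)
qed

lemma oscI_deriv: "(oscI n has_vector_derivative osc1 n x) (at x)"
proof -
  have "((\<lambda>x. integral (cbox 0 pi) (\<lambda>\<theta>. cis (x * sin \<theta> - of_int n * \<theta>))) has_vector_derivative
      integral (cbox 0 pi) (\<lambda>\<theta>. \<i> * of_real (sin \<theta>) * cis (x * sin \<theta> - of_int n * \<theta>))) (at x within UNIV)"
  proof (rule leibniz_rule_vector_derivative)
    fix y :: real and t :: real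
    have "((\<lambda>y. y * sin t - of_int n * t) has_derivative (\<lambda>h. h * sin t)) (at y)"
      by (auto intro!: derivative_eq_intros)
    from has_derivative_cis[OF this]
    show "((\<lambda>y. cis (y * sin t - of_int n * t)) has_vector_derivative \<i> * of_real (sin t) * cis (y * sin t - of_int n * t)) (at y within UNIV)"
      unfolding has_vector_derivative_def
      by (rule has_derivative_eq_rhs) (simp add: fun_eq_iff scaleR_conv_of_real mult_ac)
  next
    fix y :: real
    show "(\<lambda>\<theta>. cis (y * sin \<theta> - of_int n * \<theta>)) integrable_on cbox 0 pi"
      by (intro integrable_continuous continuous_intros)
  next
    show "continuous_on (UNIV \<times> cbox 0 pi) (\<lambda>(y, t). \<i> * of_real (sin t) * cis (y * sin t - of_int n * t))"
      by (auto intro!: continuous_intros simp: split_beta)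
  qed auto
  thus ?thesis unfolding oscI_def osc1_def by simp
qed

lemma hankel_deriv:
  assumes x: "x > 3 + \<bar>of_int n\<bar>"
  shows "(hankel1 n has_vector_derivative hD n x) (at x)"
proof -
  have "((\<lambda>y. oscI n y / pi - \<i> * of_real (tailI n y) / pi) has_vector_derivative
          (osc1 n x / pi - \<i> * of_real (tailD n x) / pi)) (at x)"
    using oscI_deriv[of n x] tail_deriv[OF x]
    by (auto intro!: derivative_eq_intros simp: has_real_derivative_iff_has_vector_derivative[symmetric])
  thus ?thesis unfolding hD_def
    by (rule has_vector_derivative_transform_within_open[where S = "{\<bar>of_int n\<bar><..}"])
       (use x hankel_repr in auto)
qed

lemma cis_lin_vd: "((\<lambda>\<theta>. cis (- (of_int n * \<theta>))) has_vector_derivative (- \<i> * of_int n * cis (- (of_int n * \<theta>)))) (at \<theta>)"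
proof -
  have "((\<lambda>\<theta>. - (of_int n * \<theta>)) has_derivative (\<lambda>h. h * (- of_int n))) (at \<theta>)"
    by (auto intro!: derivative_eq_intros)
  from has_derivative_cis[OF this] show ?thesis unfolding has_vector_derivative_def
    by (rule has_derivative_eq_rhs) (simp add: fun_eq_iff scaleR_conv_of_real mult_ac)
qed

lemma cis_split: "cis (x * sin \<theta> - of_int n * \<theta>) = cis (- (of_int n * \<theta>)) * cis (x * sin \<theta>)"
  by (simp add: cis_mult)

lemma oscI_bound:
  assumes "x \<ge> 1"
  shows "norm (oscI n x) \<le> (14 + 12 * \<bar>of_int n\<bar>) / sqrt x"
proof -
  have "norm (integral {0..pi} (\<lambda>\<theta>. cis (- (of_int n * \<theta>)) * cis (x * sin \<theta>))) \<le> (12 * (1 + \<bar>of_int n\<bar>) + 2 * 1) / sqrt x"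
  proof (rule osc_decay[OF cis_lin_vd])
    show "continuous_on UNIV (\<lambda>\<theta>. - \<i> * of_int n * cis (- (of_int n * \<theta>)))" by (intro continuous_intros)
    show "norm (- \<i> * of_int n * cis (- (of_int n * \<theta>))) \<le> \<bar>of_int n\<bar>" for \<theta>
      by (simp add: norm_mult)
  qed (use assms in auto)
  thus ?thesis unfolding oscI_def cis_split by (simp add: algebra_simps)
qed

lemma osc1_bound:
  assumes "x \<ge> 1"
  shows "norm (osc1 n x) \<le> (26 + 12 * \<bar>of_int n\<bar>) / sqrt x"
proof -
  let ?a = "\<lambda>\<theta>. \<i> * (of_real (sin \<theta>) * cis (- (of_int n * \<theta>)))"
  let ?a' = "\<lambda>\<theta>. \<i> * of_real (cos \<theta>) * cis (- (of_int n * \<theta>)) + of_real (sin \<theta>) * of_int n * cis (- (of_int n * \<theta>))"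
  have d: "(?a has_vector_derivative ?a' \<theta>) (at \<theta>)" for \<theta>
  proof -
    have s: "((\<lambda>\<theta>. complex_of_real (sin \<theta>)) has_vector_derivative of_real (cos \<theta>)) (at \<theta>)"
      by (auto intro!: derivative_eq_intros)
    show ?thesis
      using has_vector_derivative_mult_right[OF has_vector_derivative_mult[OF s cis_lin_vd[of n]], of \<i>]
      by (rule has_vector_derivative_eq_rhs) (simp add: algebra_simps)
  qed
  have "norm (integral {0..pi} (\<lambda>\<theta>. ?a \<theta> * cis (x * sin \<theta>))) \<le> (12 * (1 + (1 + \<bar>of_int n\<bar>)) + 2 * 1) / sqrt x"
  proof (rule osc_decay[OF d])
    show "continuous_on UNIV ?a'" by (intro continuous_intros)
    show "norm (?a \<theta>) \<le> 1" for \<theta> by (simp add: norm_mult)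
    show "norm (?a' \<theta>) \<le> 1 + \<bar>of_int n\<bar>" for \<theta>
    proof -
      have "norm (?a' \<theta>) \<le> norm (\<i> * of_real (cos \<theta>) * cis (- (of_int n * \<theta>))) + norm (of_real (sin \<theta>) * of_int n * cis (- (of_int n * \<theta>)))"
        by (rule norm_triangle_ineq)
      also have "\<dots> = \<bar>cos \<theta>\<bar> + \<bar>sin \<theta>\<bar> * \<bar>of_int n\<bar>" by (simp add: norm_mult)
      also have "\<dots> \<le> 1 + 1 * \<bar>of_int n\<bar>"
        by (intro add_mono mult_right_mono) auto
      finally show ?thesis by simp
    qed
  qed (use assms in auto)
  thus ?thesis unfolding osc1_def cis_split by (simp add: algebra_simps)
qed

lemma div_pi_le: "0 \<le> (a::real) \<Longrightarrow> a / pi \<le> a"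
  using divide_left_mono[of 1 pi a] pi_ge_two by simp

definition Ch :: "int \<Rightarrow> real" where "Ch n = 30 + 12 * \<bar>of_int n\<bar>"

lemma hankel_bounds:
  assumes x: "x \<ge> 4 + 2 * \<bar>of_int n\<bar>"
  shows "norm (hankel1 n x) \<le> Ch n / sqrt x" "norm (hD n x) \<le> Ch n / sqrt x"
proof -
  have x1: "x \<ge> 1" using x by simp
  have sx: "sqrt x \<le> x"
  proof -
    have "sqrt x * 1 \<le> sqrt x * sqrt x" using x1 by (intro mult_left_mono) auto
    thus ?thesis using x1 by simp
  qed
  have sxp: "sqrt x > 0" using x1 by simp
  have q: "4 / x \<le> 4 / sqrt x" using sx sxp by (intro divide_left_mono) auto
  have pi1: "1 \<le> pi" using pi_ge_two by simp
  have t1: "\<bar>tailI n x\<bar> \<le> 4 / sqrt x"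
  proof -
    have "\<bar>tailI n x\<bar> \<le> 2 / (x - \<bar>of_int n\<bar>)" using tail_integrable(2)[of n x] x by simp
    also have "\<dots> \<le> 2 / (x / 2)" using x by (intro divide_left_mono) auto
    also have "\<dots> = 4 / x" by simp
    finally show ?thesis using q by simp
  qed
  have t2: "\<bar>tailD n x\<bar> \<le> 4 / sqrt x"
  proof -
    have "\<bar>tailD n x\<bar> \<le> 2 / (x - 1 - \<bar>of_int n\<bar>)" using tailD_integrable(2)[of n x] x by simp
    also have "\<dots> \<le> 2 / (x / 2)" using x by (intro divide_left_mono) auto
    also have "\<dots> = 4 / x" by simp
    finally show ?thesis using q by simp
  qed
  have "norm (hankel1 n x) = norm (oscI n x / pi - \<i> * of_real (tailI n x) / pi)"
    using hankel_repr[of n x] x by simp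
  also have "\<dots> \<le> norm (oscI n x) / pi + \<bar>tailI n x\<bar> / pi"
    by (rule order_trans[OF norm_triangle_ineq4]) (simp add: norm_mult norm_divide)
  also have "\<dots> \<le> norm (oscI n x) + \<bar>tailI n x\<bar>"
    by (intro add_mono div_pi_le) auto
  also have "\<dots> \<le> (14 + 12 * \<bar>of_int n\<bar>) / sqrt x + 4 / sqrt x"
    using oscI_bound[OF x1, of n] t1 by linarith
  also have "\<dots> \<le> Ch n / sqrt x" using sxp by (simp add: Ch_def add_divide_distrib[symmetric] divide_right_mono)
  finally show "norm (hankel1 n x) \<le> Ch n / sqrt x" .
  have "norm (hD n x) \<le> norm (osc1 n x) / pi + \<bar>tailD n x\<bar> / pi"
    unfolding hD_def by (rule order_trans[OF norm_triangle_ineq4]) (simp add: norm_mult norm_divide)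
  also have "\<dots> \<le> norm (osc1 n x) + \<bar>tailD n x\<bar>"
    by (intro add_mono div_pi_le) auto
  also have "\<dots> \<le> (26 + 12 * \<bar>of_int n\<bar>) / sqrt x + 4 / sqrt x"
    using osc1_bound[OF x1, of n] t2 by linarith
  also have "\<dots> = Ch n / sqrt x" by (simp add: Ch_def add_divide_distrib[symmetric])
  finally show "norm (hD n x) \<le> Ch n / sqrt x" .
qed




lemma lin_scale_1:
  assumes "(f has_derivative L) F"
  shows "L (of_real t * v) = of_real t * L v"
proof -
  have "linear L" using has_derivative_bounded_linear[OF assms] bounded_linear.linear by blast
  hence "L (t *\<^sub>R v) = t *\<^sub>R L v" by (rule linear_scale)
  thus ?thesis by (simp add: scaleR_conv_of_real)
qed

lemma dir_deriv:
  fixes f :: "complex \<Rightarrow> complex"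
  assumes fd: "(f has_derivative L) (at (\<gamma> 0))" and gd: "(\<gamma> has_vector_derivative v) (at 0)"
  shows "((\<lambda>t. f (\<gamma> t)) has_vector_derivative L v) (at 0)"
proof -
  have g: "(\<gamma> has_derivative (\<lambda>t. of_real t * v)) (at 0)"
    using gd unfolding has_vector_derivative_def by (simp add: scaleR_conv_of_real)
  have "((\<lambda>t. f (\<gamma> t)) has_derivative (\<lambda>t. L (of_real t * v))) (at 0)"
    using has_derivative_compose[OF g fd] by (simp add: o_def)
  thus ?thesis unfolding has_vector_derivative_def using lin_scale_1[OF fd]
    by (simp add: scaleR_conv_of_real)
qed

lemma pd_from_deriv:
  fixes f :: "complex \<Rightarrow> complex"
  assumes fd: "(f has_derivative L) (at z)"
  shows "pd1 f z = L 1" "pd2 f z = L \<i>"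
proof -
  have "((\<lambda>t. f (z + of_real t * v)) has_vector_derivative L v) (at 0)" for v
  proof -
    have g: "((\<lambda>t. z + of_real t * v) has_vector_derivative v) (at 0)"
      by (auto intro!: derivative_eq_intros)
    have fd': "(f has_derivative L) (at ((\<lambda>t. z + of_real t * v) 0))" using fd by simp
    show ?thesis by (rule dir_deriv[OF fd' g])
  qed
  from this[of 1] this[of \<i>] show "pd1 f z = L 1" "pd2 f z = L \<i>"
    unfolding pd1_def pd2_def by (auto simp: vector_derivative_at mult.commute)
qed

lemma rm_differentiable:
  assumes z: "z \<noteq> 0" and hd: "(hankel1 n has_vector_derivative D) (at (\<kappa> * cmod z))"
  shows "\<exists>L. (radial_mode \<kappa> n has_derivative L) (at z)"
proof -
  have n: "((\<lambda>w. \<kappa> * cmod w) has_derivative (\<lambda>h. \<kappa> * (h \<bullet> sgn z))) (at z)"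
    using has_derivative_norm[OF z] by (auto intro!: derivative_eq_intros)
  have h: "((\<lambda>w. hankel1 n (\<kappa> * cmod w)) has_derivative (\<lambda>h. (\<kappa> * (h \<bullet> sgn z)) *\<^sub>R D)) (at z)"
    using has_derivative_compose[OF n hd[unfolded has_vector_derivative_def]] by (simp add: o_def)
  have c: "((\<lambda>w. of_real (cmod w)::complex) has_derivative (\<lambda>h. of_real (h \<bullet> sgn z))) (at z)"
    using has_derivative_of_real[OF has_derivative_norm[OF z]] .
  have nz: "complex_of_real (cmod z) \<noteq> 0" using z by simp
  note q = has_derivative_divide[OF has_derivative_ident c nz]
  have "z / of_real (cmod z) \<noteq> 0" using z by simp
  from has_derivative_mult[OF h has_derivative_power_int[OF this q, of n]]
  show ?thesis unfolding radial_mode_def[abs_def] by blast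
qed

lemma rm_on_ray:
  assumes "r > 0"
  shows "radial_mode \<kappa> n (of_real r * cis \<theta>) = hankel1 n (\<kappa> * r) * cis (of_int n * \<theta>)"
proof -
  have "cmod (of_real r * cis \<theta>) = r" using assms by (simp add: norm_mult)
  moreover have "of_real r * cis \<theta> / of_real r = cis \<theta>" using assms by simp
  ultimately show ?thesis unfolding radial_mode_def by (simp add: cis_power_int)
qed

lemma rm_dir_radial:
  assumes R: "R > 0" and big: "\<kappa> * R > 3 + \<bar>of_int n\<bar>"
    and fd: "(radial_mode \<kappa> n has_derivative L) (at (of_real R * cis \<theta>))"
  shows "L (cis \<theta>) = of_real \<kappa> * hD n (\<kappa> * R) * cis (of_int n * \<theta>)"
proof -
  let ?\<gamma> = "\<lambda>t. of_real (R + t) * cis \<theta>"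
  have g: "(?\<gamma> has_vector_derivative cis \<theta>) (at 0)"
    by (auto intro!: derivative_eq_intros)
  have fd': "(radial_mode \<kappa> n has_derivative L) (at (?\<gamma> 0))" using fd by simp
  have A: "((\<lambda>t. radial_mode \<kappa> n (?\<gamma> t)) has_vector_derivative L (cis \<theta>)) (at 0)"
    by (rule dir_deriv[OF fd' g])
  have k: "((\<lambda>t. \<kappa> * (R + t)) has_vector_derivative \<kappa>) (at 0)"
    using has_real_derivative_iff_has_vector_derivative[THEN iffD1, of "\<lambda>t. \<kappa> * (R + t)" \<kappa> "at 0"]
    by (auto intro!: derivative_eq_intros)
  have hk: "(hankel1 n has_vector_derivative hD n (\<kappa> * R)) (at ((\<lambda>t. \<kappa> * (R + t)) 0))"
    using hankel_deriv[OF big] by simp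
  have B0: "((\<lambda>t. hankel1 n (\<kappa> * (R + t))) has_vector_derivative \<kappa> *\<^sub>R hD n (\<kappa> * R)) (at 0)"
    using vector_diff_chain_at[OF k hk] by (simp add: o_def)
  have B: "((\<lambda>t. hankel1 n (\<kappa> * (R + t)) * cis (of_int n * \<theta>)) has_vector_derivative
            (\<kappa> *\<^sub>R hD n (\<kappa> * R)) * cis (of_int n * \<theta>)) (at 0)"
    by (rule has_vector_derivative_mult_left[OF B0])
  have C: "((\<lambda>t. radial_mode \<kappa> n (?\<gamma> t)) has_vector_derivative (\<kappa> *\<^sub>R hD n (\<kappa> * R)) * cis (of_int n * \<theta>)) (at 0)"
  proof (rule has_vector_derivative_transform_within_open[OF B, of "{-R<..}"])
    fix t assume "t \<in> {-R<..}"
    hence "R + t > 0" by simp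
    thus "hankel1 n (\<kappa> * (R + t)) * cis (of_int n * \<theta>) = radial_mode \<kappa> n (?\<gamma> t)"
      using rm_on_ray[of "R + t" \<kappa> n \<theta>] by simp
  qed (use R in auto)
  show ?thesis using vector_derivative_unique_at[OF A C] by (simp add: scaleR_conv_of_real)
qed

lemma rm_dir_angular:
  assumes R: "R > 0"
    and fd: "(radial_mode \<kappa> n has_derivative L) (at (of_real R * cis \<theta>))"
  shows "L (\<i> * cis \<theta>) = \<i> * of_int n * hankel1 n (\<kappa> * R) * cis (of_int n * \<theta>) / of_real R"
proof -
  let ?\<gamma> = "\<lambda>t. of_real R * cis (\<theta> + t)"
  have cd: "((\<lambda>t. cis (a + b * t)) has_vector_derivative (\<i> * of_real b * cis a)) (at 0)" for a b
  proof -
    have "((\<lambda>t. a + b * t) has_derivative (\<lambda>h. h * b)) (at 0)"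
      by (auto intro!: derivative_eq_intros)
    from has_derivative_cis[OF this] show ?thesis unfolding has_vector_derivative_def
      by (rule has_derivative_eq_rhs) (simp add: fun_eq_iff scaleR_conv_of_real mult_ac)
  qed
  have g: "(?\<gamma> has_vector_derivative (of_real R * (\<i> * cis \<theta>))) (at 0)"
    using has_vector_derivative_mult_right[OF cd[of \<theta> 1], of "of_real R"] by simp
  have fd': "(radial_mode \<kappa> n has_derivative L) (at (?\<gamma> 0))" using fd by simp
  have A: "((\<lambda>t. radial_mode \<kappa> n (?\<gamma> t)) has_vector_derivative L (of_real R * (\<i> * cis \<theta>))) (at 0)"
    by (rule dir_deriv[OF fd' g])
  have eqf: "radial_mode \<kappa> n (?\<gamma> t) = hankel1 n (\<kappa> * R) * cis (of_int n * \<theta> + of_int n * t)" for t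
    using rm_on_ray[OF R, of \<kappa> n "\<theta> + t"] by (simp add: algebra_simps)
  have B: "((\<lambda>t. radial_mode \<kappa> n (?\<gamma> t)) has_vector_derivative
        hankel1 n (\<kappa> * R) * (\<i> * of_int n * cis (of_int n * \<theta>))) (at 0)"
    unfolding eqf using has_vector_derivative_mult_right[OF cd[of "of_int n * \<theta>" "of_int n"], of "hankel1 n (\<kappa> * R)"]
    by simp
  have "of_real R * L (\<i> * cis \<theta>) = hankel1 n (\<kappa> * R) * (\<i> * of_int n * cis (of_int n * \<theta>))"
    using vector_derivative_unique_at[OF A B] lin_scale_1[OF fd, of R "\<i> * cis \<theta>"] by simp
  thus ?thesis using R by (simp add: field_simps)
qed

lemma lin_add_L:
  assumes "(f has_derivative L) F"
  shows "L (a + b) = L a + L b"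
proof -
  have "linear L" using has_derivative_bounded_linear[OF assms] bounded_linear.linear by blast
  thus ?thesis by (rule linear_add)
qed

lemma cdot_lin:
  fixes f :: "complex \<Rightarrow> complex"
  assumes fd: "(f has_derivative L) (at z)"
  shows "cdot (pd1 f z, pd2 f z) (cos \<theta>, sin \<theta>) = cnj (L (cis \<theta>))"
    "cdot (pd1 f z, pd2 f z) (- sin \<theta>, cos \<theta>) = cnj (L (\<i> * cis \<theta>))"
    "cdot (pd2 f z, - pd1 f z) (cos \<theta>, sin \<theta>) = cnj (L (\<i> * cis \<theta>))"
    "cdot (pd2 f z, - pd1 f z) (- sin \<theta>, cos \<theta>) = - cnj (L (cis \<theta>))"
proof -
  have e1: "cis \<theta> = of_real (cos \<theta>) * 1 + of_real (sin \<theta>) * \<i>" by (simp add: complex_eq_iff)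
  have e2: "\<i> * cis \<theta> = of_real (- sin \<theta>) * 1 + of_real (cos \<theta>) * \<i>" by (simp add: complex_eq_iff)
  have L1: "L (cis \<theta>) = of_real (cos \<theta>) * L 1 + of_real (sin \<theta>) * L \<i>"
    by (subst e1, simp only: lin_add_L[OF fd] lin_scale_1[OF fd])
  have L2: "L (\<i> * cis \<theta>) = of_real (- sin \<theta>) * L 1 + of_real (cos \<theta>) * L \<i>"
    by (subst e2, simp only: lin_add_L[OF fd] lin_scale_1[OF fd])
  note pd = pd_from_deriv[OF fd]
  show "cdot (pd1 f z, pd2 f z) (cos \<theta>, sin \<theta>) = cnj (L (cis \<theta>))"
    "cdot (pd1 f z, pd2 f z) (- sin \<theta>, cos \<theta>) = cnj (L (\<i> * cis \<theta>))"
    "cdot (pd2 f z, - pd1 f z) (cos \<theta>, sin \<theta>) = cnj (L (\<i> * cis \<theta>))"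
    "cdot (pd2 f z, - pd1 f z) (- sin \<theta>, cos \<theta>) = - cnj (L (cis \<theta>))"
    unfolding cdot_def pd L1 L2 by (simp_all add: algebra_simps)
qed

lemma field_vals:
  fixes R \<kappa> \<theta> :: real and m :: int
  assumes R: "R > 0" and k: "\<kappa> > 0" and big: "\<kappa> * R > 3 + \<bar>of_int m\<bar>"
  defines "z \<equiv> of_real R * cis \<theta>"
  shows "cdot (HP \<kappa> m z) (cos \<theta>, sin \<theta>) = cnj (of_real \<kappa> * hD m (\<kappa> * R) * cis (of_int m * \<theta>))"
    "cdot (HP \<kappa> m z) (- sin \<theta>, cos \<theta>) = cnj (\<i> * of_int m * hankel1 m (\<kappa> * R) * cis (of_int m * \<theta>) / of_real R)"
    "cdot (HS \<kappa> m z) (cos \<theta>, sin \<theta>) = cnj (\<i> * of_int m * hankel1 m (\<kappa> * R) * cis (of_int m * \<theta>) / of_real R)"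
    "cdot (HS \<kappa> m z) (- sin \<theta>, cos \<theta>) = - cnj (of_real \<kappa> * hD m (\<kappa> * R) * cis (of_int m * \<theta>))"
proof -
  have z0: "z \<noteq> 0" using R by (simp add: z_def)
  have cz: "cmod z = R" using R by (simp add: z_def norm_mult)
  have hd: "(hankel1 m has_vector_derivative hD m (\<kappa> * R)) (at (\<kappa> * cmod z))"
    using hankel_deriv[OF big] cz by simp
  obtain L where fd: "(radial_mode \<kappa> m has_derivative L) (at z)"
    using rm_differentiable[OF z0 hd] by blast
  have fd': "(radial_mode \<kappa> m has_derivative L) (at (of_real R * cis \<theta>))" using fd by (simp add: z_def)
  note r1 = rm_dir_radial[OF R big fd'] and r2 = rm_dir_angular[OF R fd']
  note c = cdot_lin[OF fd, of \<theta>]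
  show "cdot (HP \<kappa> m z) (cos \<theta>, sin \<theta>) = cnj (of_real \<kappa> * hD m (\<kappa> * R) * cis (of_int m * \<theta>))"
    "cdot (HP \<kappa> m z) (- sin \<theta>, cos \<theta>) = cnj (\<i> * of_int m * hankel1 m (\<kappa> * R) * cis (of_int m * \<theta>) / of_real R)"
    "cdot (HS \<kappa> m z) (cos \<theta>, sin \<theta>) = cnj (\<i> * of_int m * hankel1 m (\<kappa> * R) * cis (of_int m * \<theta>) / of_real R)"
    "cdot (HS \<kappa> m z) (- sin \<theta>, cos \<theta>) = - cnj (of_real \<kappa> * hD m (\<kappa> * R) * cis (of_int m * \<theta>))"
    unfolding HP_def HS_def c r1 r2 by simp_all
qed




lemma sum_split2: fixes N :: nat shows "(\<Sum>i<2*N. f i) = (\<Sum>i<N. f i) + (\<Sum>i<N. f (i + N))"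
proof -
  have "{..<2*N} = {..<N} \<union> {N..<2*N}" by auto
  hence "(\<Sum>i<2*N. f i) = (\<Sum>i<N. f i) + (\<Sum>i\<in>{N..<2*N}. f i)"
    by (metis sum.union_disjoint finite_lessThan finite_atLeastLessThan ivl_disj_int_one(2) lessThan_atLeast0)
  also have "(\<Sum>i\<in>{N..<2*N}. f i) = (\<Sum>i\<in>{0+N..<N+N}. f i)" by (simp add: mult_2)
  also have "\<dots> = (\<Sum>i\<in>{0..<N}. f (i + N))" by (rule sum.shift_bounds_nat_ivl)
  finally show ?thesis by (simp add: atLeast0LessThan)
qed

lemma roots_sum:
  fixes N :: nat and k :: int
  assumes N: "N > 0" and k: "\<bar>k\<bar> < int N"
  shows "(\<Sum>j<N. cis (of_int k * theta_r N (j+1))) = (if k = 0 then of_nat N else 0)"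
proof (cases "k = 0")
  case True thus ?thesis by simp
next
  case False
  define w where "w = cis (2 * pi * of_int k / real N)"
  have pw: "cis (of_int k * theta_r N (j+1)) = w ^ (j+1)" for j
  proof -
    have "w ^ (j+1) = cis (real (j+1) * (2 * pi * of_int k / real N))" unfolding w_def by (simp only: Complex.DeMoivre)
    moreover have "real (j+1) * (2 * pi * of_int k / real N) = of_int k * theta_r N (j+1)"
      by (simp add: theta_r_def)
    ultimately show ?thesis by simp
  qed
  have w1: "w \<noteq> 1"
  proof
    assume "w = 1"
    hence "cos (2 * pi * of_int k / real N) = 1" unfolding w_def by (simp add: complex_eq_iff)
    then obtain j :: int where j: "2 * pi * of_int k / real N = of_int j * 2 * pi"
      by (auto simp: cos_one_2pi_int)
    hence "real_of_int k = real_of_int j * real N" using N by (simp add: field_simps)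
    hence kj: "k = j * int N" by (metis of_int_eq_iff of_int_mult of_int_of_nat_eq)
    show False
    proof (cases "j = 0")
      case True thus False using kj False by simp
    next
      case False
      hence "\<bar>k\<bar> \<ge> int N" unfolding kj abs_mult using False by (simp add: mult_le_cancel_right1 zero_less_abs_iff) (metis abs_ge_zero int_one_le_iff_zero_less zero_less_abs_iff)
      thus False using k by simp
    qed
  qed
  have wN: "w ^ N = 1"
  proof -
    have "w ^ N = cis (2 * pi * of_int k)" unfolding w_def Complex.DeMoivre using N by simp
    thus ?thesis by (simp add: cis_multiple_2pi)
  qed
  have "(\<Sum>j<N. cis (of_int k * theta_r N (j+1))) = w * (\<Sum>j<N. w ^ j)"
    unfolding pw by (simp add: sum_distrib_left)
  also have "\<dots> = 0" using wN w1 by (simp add: geometric_sum)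
  finally show ?thesis using False by simp
qed

definition mm :: "nat \<Rightarrow> nat \<Rightarrow> int" where
  "mm K l = (if l < 2*K+1 then int l - int K else int l - int (2*K+1) - int K)"

definition cpar :: "real \<Rightarrow> real \<Rightarrow> nat \<Rightarrow> real \<Rightarrow> nat \<Rightarrow> complex" where
  "cpar \<kappa>P \<kappa>S K R l = (if l < 2*K+1 then of_real \<kappa>P * hD (mm K l) (\<kappa>P * R)
     else \<i> * of_int (mm K l) * hankel1 (mm K l) (\<kappa>S * R) / of_real R)"

definition cperp :: "real \<Rightarrow> real \<Rightarrow> nat \<Rightarrow> real \<Rightarrow> nat \<Rightarrow> complex" where
  "cperp \<kappa>P \<kappa>S K R l = (if l < 2*K+1 then \<i> * of_int (mm K l) * hankel1 (mm K l) (\<kappa>P * R) / of_real R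
     else - (of_real \<kappa>S * hD (mm K l) (\<kappa>S * R)))"

lemma mm_bound: "l < 4*K+2 \<Longrightarrow> \<bar>mm K l\<bar> \<le> int K"
  unfolding mm_def by auto

lemma mm_eq_cases:
  assumes "l < 4*K+2" "l' < 4*K+2" "mm K l = mm K l'" "l \<noteq> l'"
  shows "(l < 2*K+1) \<longleftrightarrow> \<not> (l' < 2*K+1)"
  using assms unfolding mm_def by (auto split: if_splits)

lemma aux_sq: "(u::real) > 0 \<Longrightarrow> (u * u) * (C / (u * v)) = u * C / v"
  by (cases "v = 0") (simp_all add: field_simps)

lemma kap_bounds:
  fixes \<kappa> R :: real and m :: int and K :: nat
  assumes k: "\<kappa> > 0" and R: "R > 0" and m: "\<bar>m\<bar> \<le> int K" and big: "\<kappa> * R \<ge> 4 + 2 * real K"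
  shows "norm (of_real \<kappa> * hD m (\<kappa> * R)) \<le> sqrt \<kappa> * (30 + 12 * real K) / sqrt R"
    "norm (\<i> * of_int m * hankel1 m (\<kappa> * R) / of_real R) \<le> (real K / sqrt \<kappa>) * (30 + 12 * real K) / (R * sqrt R)"
proof -
  have mr: "\<bar>real_of_int m\<bar> \<le> real K" using m by (metis of_int_abs of_int_le_iff of_int_of_nat_eq)
  have x: "\<kappa> * R \<ge> 4 + 2 * \<bar>of_int m\<bar>" using big mr by linarith
  have Ch: "Ch m \<le> 30 + 12 * real K" using mr by (simp add: Ch_def)
  have sk: "sqrt (\<kappa> * R) = sqrt \<kappa> * sqrt R" by (simp add: real_sqrt_mult)
  have skp: "sqrt \<kappa> > 0" "sqrt R > 0" using k R by auto
  have dm: "Ch m / (sqrt \<kappa> * sqrt R) \<le> (30 + 12 * real K) / (sqrt \<kappa> * sqrt R)"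
    by (rule divide_right_mono[OF Ch]) (use skp in simp)
  have hb: "norm (hD m (\<kappa> * R)) \<le> (30 + 12 * real K) / (sqrt \<kappa> * sqrt R)"
    using hankel_bounds(2)[OF x] dm unfolding sk by linarith
  have hh: "norm (hankel1 m (\<kappa> * R)) \<le> (30 + 12 * real K) / (sqrt \<kappa> * sqrt R)"
    using hankel_bounds(1)[OF x] dm unfolding sk by linarith
  have "norm (of_real \<kappa> * hD m (\<kappa> * R)) = \<kappa> * norm (hD m (\<kappa> * R))" using k by (simp add: norm_mult)
  also have "\<dots> \<le> \<kappa> * ((30 + 12 * real K) / (sqrt \<kappa> * sqrt R))" using hb k by (intro mult_left_mono) auto
  also have "\<dots> = sqrt \<kappa> * (30 + 12 * real K) / sqrt R"
  proof -
    have e: "sqrt \<kappa> * sqrt \<kappa> = \<kappa>" using k by simp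
    have "(sqrt \<kappa> * sqrt \<kappa>) * ((30 + 12 * real K) / (sqrt \<kappa> * sqrt R)) = sqrt \<kappa> * (30 + 12 * real K) / sqrt R"
      by (rule aux_sq) (use skp in auto)
    thus ?thesis unfolding e .
  qed
  finally show "norm (of_real \<kappa> * hD m (\<kappa> * R)) \<le> sqrt \<kappa> * (30 + 12 * real K) / sqrt R" .
  have "norm (\<i> * of_int m * hankel1 m (\<kappa> * R) / of_real R) = \<bar>real_of_int m\<bar> * norm (hankel1 m (\<kappa> * R)) / R"
    using R by (simp add: norm_mult norm_divide)
  also have "\<dots> \<le> real K * ((30 + 12 * real K) / (sqrt \<kappa> * sqrt R)) / R"
    using mr hh R by (intro divide_right_mono mult_mono) auto
  also have "\<dots> = (real K / sqrt \<kappa>) * (30 + 12 * real K) / (R * sqrt R)"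
    using skp R by (simp add: field_simps)
  finally show "norm (\<i> * of_int m * hankel1 m (\<kappa> * R) / of_real R) \<le> (real K / sqrt \<kappa>) * (30 + 12 * real K) / (R * sqrt R)" .
qed

locale setting =
  fixes \<kappa>P \<kappa>S :: real and K Nr :: nat and R :: real
  assumes kP: "\<kappa>P > 0" and kS: "\<kappa>S > 0" and R: "R > 0"
    and bigP: "\<kappa>P * R > 3 + real K" and bigS: "\<kappa>S * R > 3 + real K"
begin

lemma big_m: "l < 4*K+2 \<Longrightarrow> \<kappa>P * R > 3 + \<bar>of_int (mm K l)\<bar> \<and> \<kappa>S * R > 3 + \<bar>of_int (mm K l)\<bar>"
proof -
  assume l: "l < 4*K+2"
  have "\<bar>real_of_int (mm K l)\<bar> \<le> real K"
    using mm_bound[OF l] by (metis of_int_abs of_int_le_iff of_int_of_nat_eq)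
  thus ?thesis using bigP bigS by linarith
qed

lemma Y_par:
  assumes l: "l < 4*K+2" and i: "i < Nr"
  shows "Ymat \<kappa>P \<kappa>S K Nr R i l = cnj (cpar \<kappa>P \<kappa>S K R l * cis (of_int (mm K l) * theta_r Nr (i+1)))"
proof -
  note b = big_m[OF l]
  show ?thesis
  proof (cases "l < 2*K+1")
    case True
    have "Hfield \<kappa>P \<kappa>S K l = HP \<kappa>P (mm K l)" using True by (simp add: Hfield_def mm_def fun_eq_iff)
    thus ?thesis using i True field_vals(1)[OF R kP, of "mm K l" "theta_r Nr (i+1)"] b
      by (simp add: Ymat_def Let_def x_r_def cpar_def)
  next
    case False
    have "Hfield \<kappa>P \<kappa>S K l = HS \<kappa>S (mm K l)" using False by (simp add: Hfield_def mm_def fun_eq_iff)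
    thus ?thesis using i False field_vals(3)[OF R kS, of "mm K l" "theta_r Nr (i+1)"] b
      by (simp add: Ymat_def Let_def x_r_def cpar_def)
  qed
qed

lemma Y_perp:
  assumes l: "l < 4*K+2" and i: "i < Nr"
  shows "Ymat \<kappa>P \<kappa>S K Nr R (i + Nr) l = cnj (cperp \<kappa>P \<kappa>S K R l * cis (of_int (mm K l) * theta_r Nr (i+1)))"
proof -
  note b = big_m[OF l]
  have ii: "i + Nr - Nr + 1 = i + 1" by simp
  show ?thesis
  proof (cases "l < 2*K+1")
    case True
    have "Hfield \<kappa>P \<kappa>S K l = HP \<kappa>P (mm K l)" using True by (simp add: Hfield_def mm_def fun_eq_iff)
    thus ?thesis using i True field_vals(2)[OF R kP, of "mm K l" "theta_r Nr (i+1)"] b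
      by (simp add: Ymat_def Let_def x_r_def cperp_def)
  next
    case False
    have "Hfield \<kappa>P \<kappa>S K l = HS \<kappa>S (mm K l)" using False by (simp add: Hfield_def mm_def fun_eq_iff)
    thus ?thesis using i False field_vals(4)[OF R kS, of "mm K l" "theta_r Nr (i+1)"] b
      by (simp add: Ymat_def Let_def x_r_def cperp_def)
  qed
qed

lemma YY_formula:
  assumes Nr: "Nr \<ge> 2*K+1" and l: "l < 4*K+2" and l': "l' < 4*K+2"
  shows "YstarY \<kappa>P \<kappa>S K Nr R l l' =
    (if mm K l = mm K l' then of_nat Nr * (cpar \<kappa>P \<kappa>S K R l * cnj (cpar \<kappa>P \<kappa>S K R l')
        + cperp \<kappa>P \<kappa>S K R l * cnj (cperp \<kappa>P \<kappa>S K R l')) else 0)"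
proof -
  let ?m = "mm K l" and ?m' = "mm K l'"
  let ?a = "cpar \<kappa>P \<kappa>S K R l" and ?a' = "cpar \<kappa>P \<kappa>S K R l'"
  let ?b = "cperp \<kappa>P \<kappa>S K R l" and ?b' = "cperp \<kappa>P \<kappa>S K R l'"
  let ?S = "\<Sum>j<Nr. cis (of_int (?m - ?m') * theta_r Nr (j+1))"
  have cc: "cnj (cnj (c * cis (of_int ?m * t))) * cnj (c' * cis (of_int ?m' * t))
      = c * cnj c' * cis (of_int (?m - ?m') * t)" for c c' t
    by (simp add: cis_cnj cis_mult algebra_simps)
  have "YstarY \<kappa>P \<kappa>S K Nr R l l' =
      (\<Sum>j<Nr. cnj (Ymat \<kappa>P \<kappa>S K Nr R j l) * Ymat \<kappa>P \<kappa>S K Nr R j l')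
      + (\<Sum>j<Nr. cnj (Ymat \<kappa>P \<kappa>S K Nr R (j + Nr) l) * Ymat \<kappa>P \<kappa>S K Nr R (j + Nr) l')"
    unfolding YstarY_def by (rule sum_split2)
  also have "\<dots> = (\<Sum>j<Nr. ?a * cnj ?a' * cis (of_int (?m - ?m') * theta_r Nr (j+1)))
      + (\<Sum>j<Nr. ?b * cnj ?b' * cis (of_int (?m - ?m') * theta_r Nr (j+1)))"
  proof (intro arg_cong2[where f="(+)"] sum.cong refl)
    fix j assume "j \<in> {..<Nr}"
    hence j: "j < Nr" by simp
    show "cnj (Ymat \<kappa>P \<kappa>S K Nr R j l) * Ymat \<kappa>P \<kappa>S K Nr R j l' = ?a * cnj ?a' * cis (of_int (?m - ?m') * theta_r Nr (j+1))"
      unfolding Y_par[OF l j] Y_par[OF l' j] by (rule cc)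
    show "cnj (Ymat \<kappa>P \<kappa>S K Nr R (j + Nr) l) * Ymat \<kappa>P \<kappa>S K Nr R (j + Nr) l' = ?b * cnj ?b' * cis (of_int (?m - ?m') * theta_r Nr (j+1))"
      unfolding Y_perp[OF l j] Y_perp[OF l' j] by (rule cc)
  qed
  also have "\<dots> = (?a * cnj ?a' + ?b * cnj ?b') * ?S"
    by (simp add: sum_distrib_left algebra_simps)
  also have "?S = (if ?m - ?m' = 0 then of_nat Nr else 0)"
  proof (rule roots_sum)
    show "Nr > 0" using Nr by simp
    have "\<bar>?m\<bar> \<le> int K" "\<bar>?m'\<bar> \<le> int K" using mm_bound l l' by auto
    thus "\<bar>?m - ?m'\<bar> < int Nr" using Nr by linarith
  qed
  finally show ?thesis by (simp add: mult.commute)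
qed

lemma ZY_formula:
  assumes l: "l < 4*K+2"
  shows "ZY \<kappa>P \<kappa>S K R l l = (if l < 2*K+1 then cpar \<kappa>P \<kappa>S K R l * cnj (cpar \<kappa>P \<kappa>S K R l)
      else cperp \<kappa>P \<kappa>S K R l * cnj (cperp \<kappa>P \<kappa>S K R l))"
proof -
  note b = big_m[OF l]
  have vP: "vector_derivative (hankel1 (mm K l)) (at (\<kappa>P * R)) = hD (mm K l) (\<kappa>P * R)"
    using hankel_deriv b by (simp add: vector_derivative_at)
  have vS: "vector_derivative (hankel1 (mm K l)) (at (\<kappa>S * R)) = hD (mm K l) (\<kappa>S * R)"
    using hankel_deriv b by (simp add: vector_derivative_at)
  show ?thesis
  proof (cases "l < 2*K+1")
    case True
    have g: "gP \<kappa>P R (int l - int K) = cpar \<kappa>P \<kappa>S K R l"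
      using True vP by (simp add: gP_def cpar_def mm_def)
    have "ZY \<kappa>P \<kappa>S K R l l = of_real ((cmod (cpar \<kappa>P \<kappa>S K R l))^2)"
      using True g by (simp add: ZY_def del: of_real_power)
    also have "\<dots> = cpar \<kappa>P \<kappa>S K R l * cnj (cpar \<kappa>P \<kappa>S K R l)" by (rule complex_norm_square)
    finally show ?thesis using True by simp
  next
    case False
    have g: "hS \<kappa>S R (int l - int (2*K+1) - int K) = cperp \<kappa>P \<kappa>S K R l"
      using False vS by (simp add: hS_def cperp_def mm_def)
    have "ZY \<kappa>P \<kappa>S K R l l = of_real ((cmod (cperp \<kappa>P \<kappa>S K R l))^2)"
      using False g by (simp add: ZY_def del: of_real_power)
    also have "\<dots> = cperp \<kappa>P \<kappa>S K R l * cnj (cperp \<kappa>P \<kappa>S K R l)" by (rule complex_norm_square)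
    finally show ?thesis using False by simp
  qed
qed

definition "AA = (sqrt \<kappa>P + sqrt \<kappa>S + real K / sqrt \<kappa>P + real K / sqrt \<kappa>S) * (30 + 12 * real K)"

lemma coef_bounds:
  assumes R1: "R \<ge> 1" and gP: "\<kappa>P * R \<ge> 4 + 2 * real K" and gS: "\<kappa>S * R \<ge> 4 + 2 * real K"
    and l: "l < 4*K+2"
  shows "norm (cpar \<kappa>P \<kappa>S K R l) \<le> AA / sqrt R" "norm (cperp \<kappa>P \<kappa>S K R l) \<le> AA / sqrt R"
    "l < 2*K+1 \<Longrightarrow> norm (cperp \<kappa>P \<kappa>S K R l) \<le> AA / (R * sqrt R)"
    "\<not> l < 2*K+1 \<Longrightarrow> norm (cpar \<kappa>P \<kappa>S K R l) \<le> AA / (R * sqrt R)"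
proof -
  have m: "\<bar>mm K l\<bar> \<le> int K" by (rule mm_bound[OF l])
  note bP = kap_bounds[OF kP R m gP] and bS = kap_bounds[OF kS R m gS]
  have CK: "30 + 12 * real K \<ge> 0" by simp
  have sp: "sqrt \<kappa>P > 0" "sqrt \<kappa>S > 0" using kP kS by auto
  have nn: "real K / sqrt \<kappa>P \<ge> 0" "real K / sqrt \<kappa>S \<ge> 0" using sp by auto
  have A1: "sqrt \<kappa>P * (30 + 12 * real K) \<le> AA" unfolding AA_def
    using sp nn CK by (intro mult_right_mono) auto
  have A2: "sqrt \<kappa>S * (30 + 12 * real K) \<le> AA" unfolding AA_def
    using sp nn CK by (intro mult_right_mono) auto
  have A3: "real K / sqrt \<kappa>P * (30 + 12 * real K) \<le> AA" unfolding AA_def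
    using sp nn CK by (intro mult_right_mono) auto
  have A4: "real K / sqrt \<kappa>S * (30 + 12 * real K) \<le> AA" unfolding AA_def
    using sp nn CK by (intro mult_right_mono) auto
  have sR: "sqrt R > 0" "sqrt R \<le> R * sqrt R" using R R1 by auto
  have dv1: "u \<le> AA \<Longrightarrow> u / sqrt R \<le> AA / sqrt R" for u using sR by (simp add: divide_right_mono)
  have dv2: "u \<le> AA \<Longrightarrow> u / (R * sqrt R) \<le> AA / (R * sqrt R)" for u using sR R by (simp add: divide_right_mono)
  have AAnn: "AA \<ge> 0" using A1 sp CK by (meson order_trans mult_nonneg_nonneg less_imp_le)
  have dv3: "AA / (R * sqrt R) \<le> AA / sqrt R" using sR AAnn by (intro divide_left_mono) auto
  show "norm (cpar \<kappa>P \<kappa>S K R l) \<le> AA / sqrt R"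
    using bP(1) bS(2) dv1[OF A1] dv2[OF A4] dv3 unfolding cpar_def by auto
  show "norm (cperp \<kappa>P \<kappa>S K R l) \<le> AA / sqrt R"
    using bP(2) bS(1) dv1[OF A2] dv2[OF A3] dv3 unfolding cperp_def by (auto simp del: norm_minus_cancel simp: norm_minus_cancel)
  show "l < 2*K+1 \<Longrightarrow> norm (cperp \<kappa>P \<kappa>S K R l) \<le> AA / (R * sqrt R)"
    using bP(2) dv2[OF A3] unfolding cperp_def by auto
  show "\<not> l < 2*K+1 \<Longrightarrow> norm (cpar \<kappa>P \<kappa>S K R l) \<le> AA / (R * sqrt R)"
    using bS(2) dv2[OF A4] unfolding cpar_def by auto
qed

lemma prod_bound:
  assumes R1: "R \<ge> 1" and a: "a \<le> AA / sqrt R" and b: "b \<le> AA / (R * sqrt R)" and a0: "a \<ge> 0" and b0: "b \<ge> 0"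
  shows "a * b \<le> AA^2 / R^2"
proof -
  have AAnn: "AA / sqrt R \<ge> 0" using a a0 by linarith
  have "a * b \<le> (AA / sqrt R) * (AA / (R * sqrt R))" using a b a0 b0 AAnn by (intro mult_mono) auto
  also have "\<dots> = AA^2 / (R * (sqrt R * sqrt R))" by (simp add: power2_eq_square field_simps)
  also have "\<dots> = AA^2 / R^2" using R1 by (simp add: power2_eq_square)
  finally show ?thesis .
qed

lemma diff_bound:
  assumes Nr: "Nr \<ge> 2*K+1" and R1: "R \<ge> 1" and gP: "\<kappa>P * R \<ge> 4 + 2 * real K" and gS: "\<kappa>S * R \<ge> 4 + 2 * real K"
    and l: "l < 4*K+2" and l': "l' < 4*K+2"
  shows "cmod (YstarY \<kappa>P \<kappa>S K Nr R l l' - of_nat Nr * ZY \<kappa>P \<kappa>S K R l l') \<le> (2 * real Nr * AA^2) / R^2"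
proof -
  let ?a = "cpar \<kappa>P \<kappa>S K R l" and ?a' = "cpar \<kappa>P \<kappa>S K R l'"
  let ?b = "cperp \<kappa>P \<kappa>S K R l" and ?b' = "cperp \<kappa>P \<kappa>S K R l'"
  note c = coef_bounds[OF R1 gP gS l] and c' = coef_bounds[OF R1 gP gS l']
  have pb: "norm (x * cnj y) \<le> AA^2 / R^2"
    if "norm x \<le> AA / sqrt R" "norm y \<le> AA / (R * sqrt R)" for x y
    using prod_bound[OF R1 that] by (simp add: norm_mult)
  have pb': "norm (x * cnj y) \<le> AA^2 / R^2"
    if "norm x \<le> AA / (R * sqrt R)" "norm y \<le> AA / sqrt R" for x y
    using prod_bound[OF R1 that(2) that(1)] by (simp add: norm_mult mult.commute)
  have Q: "AA^2 / R^2 \<ge> 0" by simp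
  have Q2: "real Nr * (AA^2 / R^2) \<le> 2 * real Nr * AA^2 / R^2"
    using mult_left_mono[OF Q, of "real Nr"] by (simp add: divide_right_mono)
  have scale: "cmod (of_nat Nr * z) \<le> real Nr * B" if "cmod z \<le> B" for z B
    using that by (simp add: norm_mult mult_left_mono)
  show ?thesis
  proof (cases "mm K l = mm K l'")
    case False
    hence "l \<noteq> l'" by auto
    thus ?thesis using False YY_formula[OF Nr l l'] by (simp add: ZY_def)
  next
    case eqm: True
    show ?thesis
    proof (cases "l = l'")
      case True
      show ?thesis
      proof (cases "l < 2*K+1")
        case lt: True
        have "YstarY \<kappa>P \<kappa>S K Nr R l l' - of_nat Nr * ZY \<kappa>P \<kappa>S K R l l' = of_nat Nr * (?b * cnj ?b)"
          using YY_formula[OF Nr l l'] ZY_formula[OF l] True lt by (simp add: algebra_simps)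
        also have "cmod \<dots> \<le> real Nr * (AA^2 / R^2)"
          by (intro scale pb c(2) c(3)[OF lt])
        finally show ?thesis using Q2 by linarith
      next
        case ge: False
        have "YstarY \<kappa>P \<kappa>S K Nr R l l' - of_nat Nr * ZY \<kappa>P \<kappa>S K R l l' = of_nat Nr * (?a * cnj ?a)"
          using YY_formula[OF Nr l l'] ZY_formula[OF l] True ge by (simp add: algebra_simps)
        also have "cmod \<dots> \<le> real Nr * (AA^2 / R^2)"
          by (intro scale pb c(1) c(4)[OF ge])
        finally show ?thesis using Q2 by linarith
      qed
    next
      case ne: False
      have xor: "(l < 2*K+1) \<longleftrightarrow> \<not> (l' < 2*K+1)" by (rule mm_eq_cases[OF l l' eqm ne])
      have "YstarY \<kappa>P \<kappa>S K Nr R l l' - of_nat Nr * ZY \<kappa>P \<kappa>S K R l l' = of_nat Nr * (?a * cnj ?a' + ?b * cnj ?b')"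
        using YY_formula[OF Nr l l'] eqm ne by (simp add: ZY_def)
      also have "cmod \<dots> \<le> real Nr * (AA^2 / R^2 + AA^2 / R^2)"
      proof -
        have "cmod (?a * cnj ?a' + ?b * cnj ?b') \<le> AA^2 / R^2 + AA^2 / R^2"
        proof (cases "l < 2*K+1")
          case True
          hence nl': "\<not> l' < 2*K+1" using xor by simp
          show ?thesis by (rule order_trans[OF norm_triangle_ineq], intro add_mono pb pb' c c' c(3)[OF True] c'(4)[OF nl'])
        next
          case False
          hence nl': "l' < 2*K+1" using xor by simp
          show ?thesis by (rule order_trans[OF norm_triangle_ineq], intro add_mono pb pb' c c' c(4)[OF False] c'(3)[OF nl'])
        qed
        thus ?thesis by (rule scale)
      qed
      finally show ?thesis by (simp add: algebra_simps)
    qed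
  qed
qed

end


lemma main_bound:
  fixes \<kappa>P \<kappa>S :: real and K Nr :: nat
  assumes kP: "\<kappa>P > 0" and kS: "\<kappa>S > 0" and Nr: "Nr \<ge> 2*K+1"
  shows "\<exists>C>0. \<forall>\<^sub>F R in at_top. \<forall>l<4*K+2. \<forall>l'<4*K+2.
           cmod (YstarY \<kappa>P \<kappa>S K Nr R l l' - of_nat Nr * ZY \<kappa>P \<kappa>S K R l l') \<le> C / R\<^sup>2"
proof -
  define A where "A = (sqrt \<kappa>P + sqrt \<kappa>S + real K / sqrt \<kappa>P + real K / sqrt \<kappa>S) * (30 + 12 * real K)"
  define C where "C = 2 * real Nr * A^2 + 1"
  have Cp: "C > 0" unfolding C_def by (simp add: add_nonneg_pos)
  define R0 where "R0 = max 1 (max ((4 + 2 * real K) / \<kappa>P) ((4 + 2 * real K) / \<kappa>S))"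
  have "\<forall>\<^sub>F R in at_top. R \<ge> R0" by (rule eventually_ge_at_top)
  hence "\<forall>\<^sub>F R in at_top. \<forall>l<4*K+2. \<forall>l'<4*K+2.
           cmod (YstarY \<kappa>P \<kappa>S K Nr R l l' - of_nat Nr * ZY \<kappa>P \<kappa>S K R l l') \<le> C / R\<^sup>2"
  proof eventually_elim
    case (elim R)
    have R1: "R \<ge> 1" using elim by (simp add: R0_def)
    have gP: "\<kappa>P * R \<ge> 4 + 2 * real K"
    proof -
      have "(4 + 2 * real K) / \<kappa>P \<le> R" using elim by (simp add: R0_def)
      thus ?thesis using kP by (simp add: divide_le_eq mult.commute)
    qed
    have gS: "\<kappa>S * R \<ge> 4 + 2 * real K"
    proof -
      have "(4 + 2 * real K) / \<kappa>S \<le> R" using elim by (simp add: R0_def)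
      thus ?thesis using kS by (simp add: divide_le_eq mult.commute)
    qed
    interpret setting \<kappa>P \<kappa>S K Nr R
      by unfold_locales (use kP kS R1 gP gS in auto)
    have AA: "AA = A" by (simp add: AA_def A_def)
    show ?case
    proof (intro allI impI)
      fix l l' assume l: "l < 4*K+2" and l': "l' < 4*K+2"
      have "cmod (YstarY \<kappa>P \<kappa>S K Nr R l l' - of_nat Nr * ZY \<kappa>P \<kappa>S K R l l') \<le> (2 * real Nr * A^2) / R^2"
        using diff_bound[OF Nr R1 gP gS l l'] unfolding AA .
      also have "\<dots> \<le> C / R^2" unfolding C_def by (intro divide_right_mono) auto
      finally show "cmod (YstarY \<kappa>P \<kappa>S K Nr R l l' - of_nat Nr * ZY \<kappa>P \<kappa>S K R l l') \<le> C / R\<^sup>2" .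
    qed
  qed
  thus ?thesis using Cp by blast
qed

theorem lemma4p2:
  fixes lam0 mu0 rho0 \<omega> :: real and K Nr :: nat
  assumes "lam0 > 0" and "mu0 > 0" and "rho0 > 0" and "\<omega> > 0"
    and "Nr \<ge> 2*K+1"
  shows "\<exists>C>0. \<forall>\<^sub>F R in at_top. \<forall>l<4*K+2. \<forall>l'<4*K+2.
           cmod (YstarY (\<omega> / sqrt ((lam0 + 2*mu0) / rho0)) (\<omega> / sqrt (mu0 / rho0)) K Nr R l l'
                 - of_nat Nr * ZY (\<omega> / sqrt ((lam0 + 2*mu0) / rho0)) (\<omega> / sqrt (mu0 / rho0)) K R l l')
           \<le> C / R\<^sup>2"
  by (rule main_bound) (use assms in auto)


end
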